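(* Let $\alpha(t)$ be a smooth function on an interval $I$ with $\alpha'(t)\neq0$ on $I$, and let $a,b$ be real constants. Put $$\kappa=\frac{\alpha''}{2\alpha'}+\frac{\mu_0ab}{4\alpha'},\qquad X=x\cos\alpha+y\sin\alpha,\qquad Y=-x\sin\alpha+y\cos\alpha,$$ and on $\Omega=\{(t,x,y,z): t\in I,\ X\neq0\}$ define $$u=-\kappa x-\alpha'y-\frac{6\nu\cos\alpha}{X}+\frac{6\nu\sin\alpha\,Y}{X^2},\quad v=\alpha'x-\kappa y-\frac{6\nu\sin\alpha}{X}-\frac{6\nu\cos\alpha\,Y}{X^2},\quad w=2\kappa z,$$ $$H^1=-(aX+bY)\sin\alpha,\qquad H^2=(aX+bY)\cos\alpha,\qquad H^3=-bz.$$ Then there exists a smooth function $p$ on $\Omega$ such that $\mathbf v=(u,v,w)^t$, $\mathbf H=(H^1,H^2,H^3)^t$, $p$ satisfy the MHD system on $\Omega$.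
   Context: Throughout, $\nu,\eta,\mu_0,\rho$ are positive constants. The MHD system for $\mathbf v=(u,v,w)^t$, $\mathbf H=(H^1,H^2,H^3)^t$, $p$, functions of $(t,x,y,z)$, is $$\nabla\cdot\mathbf v=0,\quad \mathbf v_t+(\mathbf v\cdot\nabla)\mathbf v-\mu_0(\mathbf H\times\operatorname{rot}\mathbf H)+\tfrac1\rho\nabla p=\nu\Delta\mathbf v,\quad \nabla\cdot\mathbf H=0,\quad \mathbf H_t=\operatorname{rot}(\mathbf v\times\mathbf H)+\eta\Delta\mathbf H,$$ with $\operatorname{rot}$ the curl and $\Delta$ the componentwise Laplacian in $(x,y,z)$. A prime denotes $d/dt$; $\alpha$, $X$, $Y$, $\kappa$ depend on $t$ through $\alpha(t)$. *)

theory Defs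
  imports "HOL-Analysis.Analysis"
begin

type_synonym sfield = "real \<Rightarrow> real \<Rightarrow> real \<Rightarrow> real \<Rightarrow> real"

definition pdt :: "sfield \<Rightarrow> sfield" where
  "pdt f = (\<lambda>t x y z. deriv (\<lambda>s. f s x y z) t)"
definition pdx :: "sfield \<Rightarrow> sfield" where
  "pdx f = (\<lambda>t x y z. deriv (\<lambda>s. f t s y z) x)"
definition pdy :: "sfield \<Rightarrow> sfield" where
  "pdy f = (\<lambda>t x y z. deriv (\<lambda>s. f t x s z) y)"
definition pdz :: "sfield \<Rightarrow> sfield" where
  "pdz f = (\<lambda>t x y z. deriv (\<lambda>s. f t x y s) z)"

definition pd :: "nat \<Rightarrow> sfield \<Rightarrow> sfield" where
  "pd i f = (if i = 0 then pdt f else if i = 1 then pdx f else if i = 2 then pdy f else pdz f)"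

text \<open>Smoothness (C-infinity) of a real function of one variable on a set I
  (meant for open I): all iterated derivatives exist on I.\<close>
definition smooth1 :: "real set \<Rightarrow> (real \<Rightarrow> real) \<Rightarrow> bool" where
  "smooth1 I f \<longleftrightarrow> (\<forall>n. \<forall>t\<in>I. ((deriv ^^ n) f) differentiable (at t))"

definition smooth4 :: "(real \<times> real \<times> real \<times> real) set \<Rightarrow> sfield \<Rightarrow> bool" where
  "smooth4 \<Omega> f \<longleftrightarrow> (\<forall>is. set is \<subseteq> {0..3} \<longrightarrow>
     continuous_on \<Omega> (\<lambda>(t,x,y,z). foldr pd is f t x y z) \<and>
     (\<forall>(t,x,y,z)\<in>\<Omega>.
        (\<lambda>s. foldr pd is f s x y z) differentiable (at t) \<and>
        (\<lambda>s. foldr pd is f t s y z) differentiable (at x) \<and>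
        (\<lambda>s. foldr pd is f t x s z) differentiable (at y) \<and>
        (\<lambda>s. foldr pd is f t x y s) differentiable (at z)))"

definition lap :: "sfield \<Rightarrow> sfield" where
  "lap f = (\<lambda>t x y z. pdx (pdx f) t x y z + pdy (pdy f) t x y z + pdz (pdz f) t x y z)"

definition rot1 :: "sfield \<Rightarrow> sfield \<Rightarrow> sfield \<Rightarrow> sfield" where
  "rot1 A1 A2 A3 = (\<lambda>t x y z. pdy A3 t x y z - pdz A2 t x y z)"
definition rot2 :: "sfield \<Rightarrow> sfield \<Rightarrow> sfield \<Rightarrow> sfield" where
  "rot2 A1 A2 A3 = (\<lambda>t x y z. pdz A1 t x y z - pdx A3 t x y z)"
definition rot3 :: "sfield \<Rightarrow> sfield \<Rightarrow> sfield \<Rightarrow> sfield" where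
  "rot3 A1 A2 A3 = (\<lambda>t x y z. pdx A2 t x y z - pdy A1 t x y z)"

definition cr1 :: "sfield \<Rightarrow> sfield \<Rightarrow> sfield \<Rightarrow> sfield \<Rightarrow> sfield \<Rightarrow> sfield \<Rightarrow> sfield" where
  "cr1 A1 A2 A3 B1 B2 B3 = (\<lambda>t x y z. A2 t x y z * B3 t x y z - A3 t x y z * B2 t x y z)"
definition cr2 :: "sfield \<Rightarrow> sfield \<Rightarrow> sfield \<Rightarrow> sfield \<Rightarrow> sfield \<Rightarrow> sfield \<Rightarrow> sfield" where
  "cr2 A1 A2 A3 B1 B2 B3 = (\<lambda>t x y z. A3 t x y z * B1 t x y z - A1 t x y z * B3 t x y z)"
definition cr3 :: "sfield \<Rightarrow> sfield \<Rightarrow> sfield \<Rightarrow> sfield \<Rightarrow> sfield \<Rightarrow> sfield \<Rightarrow> sfield" where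
  "cr3 A1 A2 A3 B1 B2 B3 = (\<lambda>t x y z. A1 t x y z * B2 t x y z - A2 t x y z * B1 t x y z)"

definition conv :: "sfield \<Rightarrow> sfield \<Rightarrow> sfield \<Rightarrow> sfield \<Rightarrow> sfield" where
  "conv u v w f = (\<lambda>t x y z. u t x y z * pdx f t x y z + v t x y z * pdy f t x y z
                             + w t x y z * pdz f t x y z)"

definition MHD_solution ::
  "real \<Rightarrow> real \<Rightarrow> real \<Rightarrow> real \<Rightarrow> (real \<times> real \<times> real \<times> real) set \<Rightarrow>
   sfield \<Rightarrow> sfield \<Rightarrow> sfield \<Rightarrow> sfield \<Rightarrow> sfield \<Rightarrow> sfield \<Rightarrow> sfield \<Rightarrow> bool" where
  "MHD_solution \<nu> \<eta> \<mu>\<^sub>0 \<rho> \<Omega> u v w H1 H2 H3 p \<longleftrightarrow>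
    (\<forall>f\<in>{u, v, w, H1, H2, H3, p}. smooth4 \<Omega> f) \<and>
    (\<forall>(t,x,y,z)\<in>\<Omega>.
      pdx u t x y z + pdy v t x y z + pdz w t x y z = 0 \<and>
      pdt u t x y z + conv u v w u t x y z
        - \<mu>\<^sub>0 * cr1 H1 H2 H3 (rot1 H1 H2 H3) (rot2 H1 H2 H3) (rot3 H1 H2 H3) t x y z
        + (1 / \<rho>) * pdx p t x y z = \<nu> * lap u t x y z \<and>
      pdt v t x y z + conv u v w v t x y z
        - \<mu>\<^sub>0 * cr2 H1 H2 H3 (rot1 H1 H2 H3) (rot2 H1 H2 H3) (rot3 H1 H2 H3) t x y z
        + (1 / \<rho>) * pdy p t x y z = \<nu> * lap v t x y z \<and>
      pdt w t x y z + conv u v w w t x y z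
        - \<mu>\<^sub>0 * cr3 H1 H2 H3 (rot1 H1 H2 H3) (rot2 H1 H2 H3) (rot3 H1 H2 H3) t x y z
        + (1 / \<rho>) * pdz p t x y z = \<nu> * lap w t x y z \<and>
      pdx H1 t x y z + pdy H2 t x y z + pdz H3 t x y z = 0 \<and>
      pdt H1 t x y z = rot1 (cr1 u v w H1 H2 H3) (cr2 u v w H1 H2 H3) (cr3 u v w H1 H2 H3) t x y z
        + \<eta> * lap H1 t x y z \<and>
      pdt H2 t x y z = rot2 (cr1 u v w H1 H2 H3) (cr2 u v w H1 H2 H3) (cr3 u v w H1 H2 H3) t x y z
        + \<eta> * lap H2 t x y z \<and>
      pdt H3 t x y z = rot3 (cr1 u v w H1 H2 H3) (cr2 u v w H1 H2 H3) (cr3 u v w H1 H2 H3) t x y z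
        + \<eta> * lap H3 t x y z)"

end

theory Submission
  imports Defs
begin


definition upd :: "nat \<Rightarrow> real\<times>real\<times>real\<times>real \<Rightarrow> real \<Rightarrow> real\<times>real\<times>real\<times>real" where
 "upd i q s = (case q of (t,x,y,z) \<Rightarrow> if i=0 then (s,x,y,z) else if i=1 then (t,s,y,z) else if i=2 then (t,x,s,z) else (t,x,y,s))"
definition cmp :: "nat \<Rightarrow> real\<times>real\<times>real\<times>real \<Rightarrow> real" where
 "cmp i q = (case q of (t,x,y,z) \<Rightarrow> if i=0 then t else if i=1 then x else if i=2 then y else z)"
definition uf :: "sfield \<Rightarrow> real\<times>real\<times>real\<times>real \<Rightarrow> real" where
 "uf f q = (case q of (t,x,y,z) \<Rightarrow> f t x y z)"
definition sl :: "sfield \<Rightarrow> nat \<Rightarrow> real\<times>real\<times>real\<times>real \<Rightarrow> real \<Rightarrow> real" where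
 "sl f i q = (\<lambda>s. uf f (upd i q s))"

lemma uf_app[simp]: "uf f (t,x,y,z) = f t x y z" by (simp add: uf_def)

lemma pd_uf: "uf (pd i f) q = deriv (sl f i q) (cmp i q)"
  by (cases q) (auto simp: pd_def pdt_def pdx_def pdy_def pdz_def sl_def upd_def cmp_def)

lemma upd_cmp[simp]: "upd i q (cmp i q) = q"
  by (cases q) (auto simp: upd_def cmp_def)

lemma upd_cont: "continuous_on UNIV (upd i q)"
  by (cases q; cases "i=0"; cases "i=1"; cases "i=2") (auto simp: upd_def intro!: continuous_intros)

lemma ev_in:
  assumes "open \<Omega>" "q \<in> \<Omega>"
  shows "eventually (\<lambda>s. upd i q s \<in> \<Omega>) (nhds (cmp i q))"
proof -
  have "open (upd i q -` \<Omega>)"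
    by (rule open_vimage[OF assms(1) upd_cont])
  moreover have "cmp i q \<in> upd i q -` \<Omega>" using assms by simp
  ultimately have "eventually (\<lambda>s. s \<in> upd i q -` \<Omega>) (nhds (cmp i q))" by (rule eventually_nhds_in_open)
  then show ?thesis by simp
qed

lemma d_add: "f differentiable at c \<Longrightarrow> g differentiable at c \<Longrightarrow>
  (\<lambda>s. f s + g s) differentiable at c \<and> deriv (\<lambda>s. f s + g s) c = deriv f c + deriv g c"
  for f g :: "real \<Rightarrow> real"
proof -
  assume "f differentiable at c" "g differentiable at c"
  then have "DERIV f c :> deriv f c" "DERIV g c :> deriv g c" using DERIV_deriv_iff_real_differentiable by blast+
  then have "DERIV (\<lambda>s. f s + g s) c :> deriv f c + deriv g c" by (rule DERIV_add)
  then show ?thesis using DERIV_imp_deriv real_differentiable_def by blast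
qed

lemma d_mul: "f differentiable at c \<Longrightarrow> g differentiable at c \<Longrightarrow>
  (\<lambda>s. f s * g s) differentiable at c \<and> deriv (\<lambda>s. f s * g s) c = deriv f c * g c + f c * deriv g c"
  for f g :: "real \<Rightarrow> real"
proof -
  assume "f differentiable at c" "g differentiable at c"
  then have "DERIV f c :> deriv f c" "DERIV g c :> deriv g c" using DERIV_deriv_iff_real_differentiable by blast+
  then have "DERIV (\<lambda>s. f s * g s) c :> deriv f c * g c + f c * deriv g c" by (auto intro!: derivative_eq_intros)
  then show ?thesis using DERIV_imp_deriv real_differentiable_def by blast
qed

lemma d_inv: "f differentiable at c \<Longrightarrow> f c \<noteq> 0 \<Longrightarrow>
  (\<lambda>s. inverse (f s)) differentiable at c \<and> deriv (\<lambda>s. inverse (f s)) c = - (deriv f c * (inverse (f c) * inverse (f c)))"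
  for f :: "real \<Rightarrow> real"
proof -
  assume a: "f differentiable at c" "f c \<noteq> 0"
  have "DERIV (\<lambda>s. inverse (f s)) c :> - (deriv f c * inverse (f c ^ Suc (Suc 0)))"
    by (rule DERIV_inverse_fun) (use a DERIV_deriv_iff_real_differentiable in auto)
  moreover have "- (deriv f c * inverse (f c ^ Suc (Suc 0))) = - (deriv f c * (inverse (f c) * inverse (f c)))"
    by (simp add: power_inverse[symmetric])
  ultimately show ?thesis using DERIV_imp_deriv real_differentiable_def by metis
qed

lemma d_sin: "f differentiable at c \<Longrightarrow>
  (\<lambda>s. sin (f s)) differentiable at c \<and> deriv (\<lambda>s. sin (f s)) c = cos (f c) * deriv f c"
  for f :: "real \<Rightarrow> real"
proof -
  assume "f differentiable at c"
  then have "DERIV f c :> deriv f c" using DERIV_deriv_iff_real_differentiable by blast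
  then have "DERIV (\<lambda>s. sin (f s)) c :> cos (f c) * deriv f c"
    by (auto intro!: derivative_eq_intros)
  then show ?thesis using DERIV_imp_deriv real_differentiable_def by blast
qed

lemma d_cos: "f differentiable at c \<Longrightarrow>
  (\<lambda>s. cos (f s)) differentiable at c \<and> deriv (\<lambda>s. cos (f s)) c = - sin (f c) * deriv f c"
  for f :: "real \<Rightarrow> real"
proof -
  assume "f differentiable at c"
  then have "DERIV f c :> deriv f c" using DERIV_deriv_iff_real_differentiable by blast
  then have "DERIV (\<lambda>s. cos (f s)) c :> - sin (f c) * deriv f c"
    by (auto intro!: derivative_eq_intros)
  then show ?thesis using DERIV_imp_deriv real_differentiable_def by blast
qed

lemma deriv_c0[simp]: "deriv (\<lambda>s. c::real) x = 0" by (rule DERIV_imp_deriv) simp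
lemma deriv_id1[simp]: "deriv (\<lambda>s. s::real) x = 1" by (rule DERIV_imp_deriv) simp

lemma uf_const[simp]: "uf (\<lambda>t x y z. c) = (\<lambda>q. c)" by (auto simp: uf_def fun_eq_iff)
lemma uf_px[simp]: "uf (\<lambda>t x y z. x) = cmp 1" by (auto simp: uf_def cmp_def fun_eq_iff)
lemma uf_py[simp]: "uf (\<lambda>t x y z. y) = cmp 2" by (auto simp: uf_def cmp_def fun_eq_iff)
lemma uf_pz[simp]: "uf (\<lambda>t x y z. z) = cmp 3" by (auto simp: uf_def cmp_def fun_eq_iff)
lemma uf_tf[simp]: "uf (\<lambda>t x y z. h t) = (\<lambda>q. h (cmp 0 q))" by (auto simp: uf_def cmp_def fun_eq_iff)
lemma uf_add[simp]: "uf (\<lambda>t x y z. f t x y z + g t x y z) = (\<lambda>q. uf f q + uf g q)" by (auto simp: uf_def fun_eq_iff)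
lemma uf_mul[simp]: "uf (\<lambda>t x y z. f t x y z * g t x y z) = (\<lambda>q. uf f q * uf g q)" by (auto simp: uf_def fun_eq_iff)
lemma uf_uminus[simp]: "uf (\<lambda>t x y z. - f t x y z) = (\<lambda>q. - uf f q)" by (auto simp: uf_def fun_eq_iff)
lemma uf_inv[simp]: "uf (\<lambda>t x y z. inverse (f t x y z)) = (\<lambda>q. inverse (uf f q))" by (auto simp: uf_def fun_eq_iff)
lemma uf_sin[simp]: "uf (\<lambda>t x y z. sin (f t x y z)) = (\<lambda>q. sin (uf f q))" by (auto simp: uf_def fun_eq_iff)
lemma uf_cos[simp]: "uf (\<lambda>t x y z. cos (f t x y z)) = (\<lambda>q. cos (uf f q))" by (auto simp: uf_def fun_eq_iff)

lemma cmp_upd: "cmp j (upd i q s) = (if min j 3 = min i 3 then s else cmp j q)"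
  by (cases q) (auto simp: cmp_def upd_def)

inductive_set SF :: "(real\<times>real\<times>real\<times>real) set \<Rightarrow> (real \<Rightarrow> real) \<Rightarrow> sfield set" for \<Omega> \<alpha> where
  cst: "(\<lambda>t x y z. c) \<in> SF \<Omega> \<alpha>"
| px: "(\<lambda>t x y z. x) \<in> SF \<Omega> \<alpha>"
| py: "(\<lambda>t x y z. y) \<in> SF \<Omega> \<alpha>"
| pz: "(\<lambda>t x y z. z) \<in> SF \<Omega> \<alpha>"
| tn: "(\<lambda>t x y z. (deriv^^n) \<alpha> t) \<in> SF \<Omega> \<alpha>"
| add: "f \<in> SF \<Omega> \<alpha> \<Longrightarrow> g \<in> SF \<Omega> \<alpha> \<Longrightarrow> (\<lambda>t x y z. f t x y z + g t x y z) \<in> SF \<Omega> \<alpha>"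
| mul: "f \<in> SF \<Omega> \<alpha> \<Longrightarrow> g \<in> SF \<Omega> \<alpha> \<Longrightarrow> (\<lambda>t x y z. f t x y z * g t x y z) \<in> SF \<Omega> \<alpha>"
| inv: "f \<in> SF \<Omega> \<alpha> \<Longrightarrow> \<forall>q\<in>\<Omega>. uf f q \<noteq> 0 \<Longrightarrow> (\<lambda>t x y z. inverse (f t x y z)) \<in> SF \<Omega> \<alpha>"
| sin: "f \<in> SF \<Omega> \<alpha> \<Longrightarrow> (\<lambda>t x y z. sin (f t x y z)) \<in> SF \<Omega> \<alpha>"
| cos: "f \<in> SF \<Omega> \<alpha> \<Longrightarrow> (\<lambda>t x y z. cos (f t x y z)) \<in> SF \<Omega> \<alpha>"
| agr: "g \<in> SF \<Omega> \<alpha> \<Longrightarrow> \<forall>q\<in>\<Omega>. uf f q = uf g q \<Longrightarrow> f \<in> SF \<Omega> \<alpha>"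

definition good :: "(real\<times>real\<times>real\<times>real) set \<Rightarrow> sfield \<Rightarrow> bool" where
  "good \<Omega> f \<longleftrightarrow> continuous_on \<Omega> (uf f) \<and> (\<forall>q\<in>\<Omega>. \<forall>i. sl f i q differentiable at (cmp i q))"

lemma continuous_on_cmp: "continuous_on S (cmp j)"
proof -
  have "cmp j = (\<lambda>q. if j=0 then fst q else if j=1 then fst (snd q) else if j=2 then fst (snd (snd q)) else snd (snd (snd q)))"
    by (auto simp: cmp_def fun_eq_iff split: prod.split)
  then show ?thesis by (cases "j=0"; cases "j=1"; cases "j=2") (auto intro!: continuous_intros)
qed

lemma diff_ifs: "(\<lambda>s. if P then s else (c::real)) differentiable at x"
  by (cases P) auto

lemma SF_main:
  assumes \<Omega>: "open \<Omega>" and h\<alpha>: "\<forall>q\<in>\<Omega>. \<forall>n. (deriv^^n) \<alpha> differentiable at (cmp 0 q)"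
  shows "f \<in> SF \<Omega> \<alpha> \<Longrightarrow> good \<Omega> f \<and> (\<forall>i. pd i f \<in> SF \<Omega> \<alpha>)"
proof (induction rule: SF.induct)
  case (cst c)
  have "pd i (\<lambda>t x y z. c) \<in> SF \<Omega> \<alpha>" for i
    by (rule SF.agr[OF SF.cst[of 0]]) (simp add: pd_uf sl_def)
  then show ?case by (simp add: good_def sl_def)
next
  case px
  have "pd i (\<lambda>t x y z. x) \<in> SF \<Omega> \<alpha>" for i
    by (rule SF.agr[OF SF.cst[of "if min i 3 = 1 then 1 else 0"]]) (auto simp add: pd_uf sl_def cmp_upd min_def)
  then show ?case by (simp add: good_def sl_def cmp_upd continuous_on_cmp diff_ifs)
next
  case py
  have "pd i (\<lambda>t x y z. y) \<in> SF \<Omega> \<alpha>" for i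
    by (rule SF.agr[OF SF.cst[of "if min i 3 = 2 then 1 else 0"]]) (auto simp add: pd_uf sl_def cmp_upd min_def)
  then show ?case by (simp add: good_def sl_def cmp_upd continuous_on_cmp diff_ifs)
next
  case pz
  have "pd i (\<lambda>t x y z. z) \<in> SF \<Omega> \<alpha>" for i
    by (rule SF.agr[OF SF.cst[of "if min i 3 = 3 then 1 else 0"]]) (auto simp add: pd_uf sl_def cmp_upd min_def)
  then show ?case by (simp add: good_def sl_def cmp_upd continuous_on_cmp diff_ifs)
next
  case (tn n)
  have d: "sl (\<lambda>t x y z. (deriv^^n) \<alpha> t) i q differentiable at (cmp i q) \<and>
     deriv (sl (\<lambda>t x y z. (deriv^^n) \<alpha> t) i q) (cmp i q) = (if i = 0 then (deriv^^Suc n) \<alpha> (cmp 0 q) else 0)"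
    if q: "q \<in> \<Omega>" for i q
  proof (cases "i = 0")
    case True
    then have "sl (\<lambda>t x y z. (deriv^^n) \<alpha> t) i q = (deriv^^n) \<alpha>"
      by (simp add: sl_def cmp_upd fun_eq_iff)
    then show ?thesis using h\<alpha> q True by simp
  next
    case False
    then have "sl (\<lambda>t x y z. (deriv^^n) \<alpha> t) i q = (\<lambda>s. (deriv^^n) \<alpha> (cmp 0 q))"
      by (auto simp add: sl_def cmp_upd fun_eq_iff min_def)
    then show ?thesis using False by simp
  qed
  have "pd i (\<lambda>t x y z. (deriv^^n) \<alpha> t) \<in> SF \<Omega> \<alpha>" for i
  proof (cases "i = 0")
    case True
    show ?thesis
      by (rule SF.agr[OF SF.tn[of "Suc n"]]) (use d True in \<open>simp add: pd_uf\<close>)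
  next
    case False
    show ?thesis
      by (rule SF.agr[OF SF.cst[of 0]]) (use d False in \<open>simp add: pd_uf\<close>)
  qed
  moreover have "continuous_on \<Omega> (\<lambda>q. (deriv ^^ n) \<alpha> (cmp 0 q))"
  proof (rule continuous_at_imp_continuous_on, rule ballI)
    fix q assume "q \<in> \<Omega>"
    then have "isCont ((deriv ^^ n) \<alpha>) (cmp 0 q)" using h\<alpha> differentiable_imp_continuous_within by blast
    moreover have "isCont (cmp 0) q" using continuous_on_cmp[of UNIV 0] continuous_on_eq_continuous_at by blast
    ultimately show "isCont (\<lambda>q. (deriv ^^ n) \<alpha> (cmp 0 q)) q" using isCont_o2 by blast
  qed
  ultimately show ?case using d by (simp add: good_def)
next
  case (add f g)
  have d: "sl (\<lambda>t x y z. f t x y z + g t x y z) i q differentiable at (cmp i q) \<and>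
     deriv (sl (\<lambda>t x y z. f t x y z + g t x y z) i q) (cmp i q) = uf (pd i f) q + uf (pd i g) q"
    if q: "q \<in> \<Omega>" for i q
  proof -
    have "sl (\<lambda>t x y z. f t x y z + g t x y z) i q = (\<lambda>s. sl f i q s + sl g i q s)"
      by (simp add: sl_def)
    then show ?thesis using d_add[of "sl f i q" "cmp i q" "sl g i q"] add q by (simp add: good_def pd_uf)
  qed
  have "pd i (\<lambda>t x y z. f t x y z + g t x y z) \<in> SF \<Omega> \<alpha>" for i
    by (rule SF.agr[OF SF.add[where f="pd i f" and g="pd i g"]]) (use add d in \<open>simp_all add: pd_uf\<close>)
  then show ?case using d add by (simp add: good_def continuous_on_add)
next
  case (mul f g)
  have d: "sl (\<lambda>t x y z. f t x y z * g t x y z) i q differentiable at (cmp i q) \<and>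
     deriv (sl (\<lambda>t x y z. f t x y z * g t x y z) i q) (cmp i q) = uf (pd i f) q * uf g q + uf f q * uf (pd i g) q"
    if q: "q \<in> \<Omega>" for i q
  proof -
    have "sl (\<lambda>t x y z. f t x y z * g t x y z) i q = (\<lambda>s. sl f i q s * sl g i q s)"
      by (simp add: sl_def)
    moreover have "sl f i q (cmp i q) = uf f q" "sl g i q (cmp i q) = uf g q" by (simp_all add: sl_def)
    ultimately show ?thesis using d_mul[of "sl f i q" "cmp i q" "sl g i q"] mul q by (simp add: good_def pd_uf)
  qed
  have "pd i (\<lambda>t x y z. f t x y z * g t x y z) \<in> SF \<Omega> \<alpha>" for i
    by (rule SF.agr[OF SF.add[OF SF.mul[where f="pd i f" and g=g] SF.mul[where f=f and g="pd i g"]]]) (use mul d in \<open>simp_all add: pd_uf\<close>)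
  then show ?case using d mul by (simp add: good_def continuous_on_mult)
next
  case (inv f)
  have d: "sl (\<lambda>t x y z. inverse (f t x y z)) i q differentiable at (cmp i q) \<and>
     deriv (sl (\<lambda>t x y z. inverse (f t x y z)) i q) (cmp i q) = - (uf (pd i f) q * (inverse (uf f q) * inverse (uf f q)))"
    if q: "q \<in> \<Omega>" for i q
  proof -
    have "sl (\<lambda>t x y z. inverse (f t x y z)) i q = (\<lambda>s. inverse (sl f i q s))"
      by (simp add: sl_def)
    moreover have "sl f i q (cmp i q) = uf f q" by (simp_all add: sl_def)
    ultimately show ?thesis using d_inv[of "sl f i q" "cmp i q"] inv q by (simp add: good_def pd_uf)
  qed
  have "pd i (\<lambda>t x y z. inverse (f t x y z)) \<in> SF \<Omega> \<alpha>" for i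
    by (rule SF.agr[OF SF.mul[OF SF.cst[of "-1"] SF.mul[where f="pd i f" and g="\<lambda>t x y z. inverse (f t x y z) * inverse (f t x y z)"]]])
      (use inv d in \<open>simp_all add: pd_uf SF.mul SF.inv\<close>)
  then show ?case using d inv by (simp add: good_def continuous_on_inverse)
next
  case (sin f)
  have d: "sl (\<lambda>t x y z. sin (f t x y z)) i q differentiable at (cmp i q) \<and>
     deriv (sl (\<lambda>t x y z. sin (f t x y z)) i q) (cmp i q) = cos (uf f q) * uf (pd i f) q"
    if q: "q \<in> \<Omega>" for i q
  proof -
    have "sl (\<lambda>t x y z. sin (f t x y z)) i q = (\<lambda>s. sin (sl f i q s))"
      by (simp add: sl_def)
    moreover have "sl f i q (cmp i q) = uf f q" by (simp_all add: sl_def)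
    ultimately show ?thesis using d_sin[of "sl f i q" "cmp i q"] sin q by (simp add: good_def pd_uf)
  qed
  have "pd i (\<lambda>t x y z. sin (f t x y z)) \<in> SF \<Omega> \<alpha>" for i
    by (rule SF.agr[OF SF.mul[OF SF.cos[where f=f], where g="pd i f"]])
      (use sin d in \<open>simp_all add: pd_uf\<close>)
  then show ?case using d sin by (simp add: good_def continuous_on_sin)
next
  case (cos f)
  have d: "sl (\<lambda>t x y z. cos (f t x y z)) i q differentiable at (cmp i q) \<and>
     deriv (sl (\<lambda>t x y z. cos (f t x y z)) i q) (cmp i q) = - sin (uf f q) * uf (pd i f) q"
    if q: "q \<in> \<Omega>" for i q
  proof -
    have "sl (\<lambda>t x y z. cos (f t x y z)) i q = (\<lambda>s. cos (sl f i q s))"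
      by (simp add: sl_def)
    moreover have "sl f i q (cmp i q) = uf f q" by (simp_all add: sl_def)
    ultimately show ?thesis using d_cos[of "sl f i q" "cmp i q"] cos q by (simp add: good_def pd_uf)
  qed
  have "pd i (\<lambda>t x y z. cos (f t x y z)) \<in> SF \<Omega> \<alpha>" for i
    by (rule SF.agr[OF SF.mul[OF SF.mul[OF SF.cst[of "-1"] SF.sin[where f=f]], where g="pd i f"]])
      (use cos d in \<open>simp_all add: pd_uf\<close>)
  then show ?case using d cos by (simp add: good_def continuous_on_cos)
next
  case (agr g f)
  have ev: "eventually (\<lambda>s. sl f i q s = sl g i q s) (nhds (cmp i q))" if q: "q \<in> \<Omega>" for i q
    using ev_in[OF \<Omega> q, of i] agr(2) by (auto simp: sl_def elim: eventually_mono)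
  have d: "sl f i q differentiable at (cmp i q) \<and> deriv (sl f i q) (cmp i q) = deriv (sl g i q) (cmp i q)"
    if q: "q \<in> \<Omega>" for i q
  proof
    have "DERIV (sl g i q) (cmp i q) :> deriv (sl g i q) (cmp i q)"
      using agr(3) q DERIV_deriv_iff_real_differentiable by (auto simp: good_def)
    then have "DERIV (sl f i q) (cmp i q) :> deriv (sl g i q) (cmp i q)"
      using DERIV_cong_ev[OF refl ev[OF q] refl] by blast
    then show "sl f i q differentiable at (cmp i q)" using real_differentiable_def by blast
    show "deriv (sl f i q) (cmp i q) = deriv (sl g i q) (cmp i q)"
      by (rule deriv_cong_ev[OF ev[OF q] refl])
  qed
  have "pd i f \<in> SF \<Omega> \<alpha>" for i
    by (rule SF.agr[of "pd i g"]) (use agr d in \<open>simp_all add: pd_uf\<close>)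
  moreover have "continuous_on \<Omega> (uf f)"
    using agr continuous_on_cong[of \<Omega> \<Omega> "uf f" "uf g"] by (simp add: good_def)
  ultimately show ?case using d by (simp add: good_def)
qed

lemma SF_foldr:
  assumes "open \<Omega>" "\<forall>q\<in>\<Omega>. \<forall>n. (deriv^^n) \<alpha> differentiable at (cmp 0 q)" "f \<in> SF \<Omega> \<alpha>"
  shows "foldr pd is f \<in> SF \<Omega> \<alpha>"
  using assms(3) by (induction "is") (use SF_main[OF assms(1,2)] in auto)

lemma SF_smooth4:
  assumes "open \<Omega>" "\<forall>q\<in>\<Omega>. \<forall>n. (deriv^^n) \<alpha> differentiable at (cmp 0 q)" "f \<in> SF \<Omega> \<alpha>"
  shows "smooth4 \<Omega> f"
proof -
  have g: "good \<Omega> (foldr pd is f)" for "is"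
    using SF_main[OF assms(1,2) SF_foldr[OF assms]] by blast
  show ?thesis unfolding smooth4_def
  proof (intro allI impI conjI)
    fix "is" :: "nat list"
    have "(\<lambda>(t,x,y,z). foldr pd is f t x y z) = uf (foldr pd is f)" by (auto simp: uf_def fun_eq_iff)
    then show "continuous_on \<Omega> (\<lambda>(t,x,y,z). foldr pd is f t x y z)" using g by (simp add: good_def)
    show "\<forall>(t,x,y,z)\<in>\<Omega>.
        (\<lambda>s. foldr pd is f s x y z) differentiable (at t) \<and>
        (\<lambda>s. foldr pd is f t s y z) differentiable (at x) \<and>
        (\<lambda>s. foldr pd is f t x s z) differentiable (at y) \<and>
        (\<lambda>s. foldr pd is f t x y s) differentiable (at z)"
    proof (clarify)
      fix t x y z assume q: "(t,x,y,z) \<in> \<Omega>"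
      have "sl (foldr pd is f) i (t,x,y,z) differentiable at (cmp i (t,x,y,z))" for i
        using g q by (simp add: good_def)
      from this[of 0] this[of 1] this[of 2] this[of 3] show "(\<lambda>s. foldr pd is f s x y z) differentiable (at t) \<and>
        (\<lambda>s. foldr pd is f t s y z) differentiable (at x) \<and>
        (\<lambda>s. foldr pd is f t x s z) differentiable (at y) \<and>
        (\<lambda>s. foldr pd is f t x y s) differentiable (at z)"
        by (simp add: sl_def upd_def cmp_def)
    qed
  qed
qed



lemma pd_agree:
  assumes "open \<Omega>" "\<forall>q\<in>\<Omega>. uf f q = uf g q" "q \<in> \<Omega>"
  shows "uf (pd i f) q = uf (pd i g) q"
proof -
  have "eventually (\<lambda>s. sl f i q s = sl g i q s) (nhds (cmp i q))"
    using ev_in[OF assms(1,3), of i] assms(2) by (auto simp: sl_def elim: eventually_mono)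
  then show ?thesis unfolding pd_uf by (rule deriv_cong_ev) simp
qed

lemma pd_cr:
  assumes \<Omega>: "open \<Omega>" "\<forall>q\<in>\<Omega>. \<forall>n. (deriv^^n) \<alpha> differentiable at (cmp 0 q)"
    and f: "f \<in> SF \<Omega> \<alpha>" "g \<in> SF \<Omega> \<alpha>" "h \<in> SF \<Omega> \<alpha>" "k \<in> SF \<Omega> \<alpha>"
    and q: "(t,x,y,z) \<in> \<Omega>"
  shows "pd i (\<lambda>t x y z. f t x y z * g t x y z - h t x y z * k t x y z) t x y z =
    (pd i f t x y z * g t x y z + f t x y z * pd i g t x y z) - (pd i h t x y z * k t x y z + h t x y z * pd i k t x y z)"
proof -
  let ?q = "(t,x,y,z)" let ?c = "cmp i ?q"
  have D: "DERIV (sl F i ?q) ?c :> deriv (sl F i ?q) ?c" if "F \<in> SF \<Omega> \<alpha>" for F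
    using SF_main[OF \<Omega> that] q DERIV_deriv_iff_real_differentiable by (auto simp: good_def)
  have "DERIV (\<lambda>s. sl f i ?q s * sl g i ?q s - sl h i ?q s * sl k i ?q s) ?c :>
     (deriv (sl f i ?q) ?c * sl g i ?q ?c + sl f i ?q ?c * deriv (sl g i ?q) ?c) -
     (deriv (sl h i ?q) ?c * sl k i ?q ?c + sl h i ?q ?c * deriv (sl k i ?q) ?c)"
    by (rule DERIV_cong[OF DERIV_diff[OF DERIV_mult[OF D[OF f(1)] D[OF f(2)]] DERIV_mult[OF D[OF f(3)] D[OF f(4)]]]])
       (simp add: algebra_simps)
  moreover have "sl (\<lambda>t x y z. f t x y z * g t x y z - h t x y z * k t x y z) i ?q
     = (\<lambda>s. sl f i ?q s * sl g i ?q s - sl h i ?q s * sl k i ?q s)"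
    by (auto simp: sl_def uf_def fun_eq_iff split: prod.split)
  ultimately have "uf (pd i (\<lambda>t x y z. f t x y z * g t x y z - h t x y z * k t x y z)) ?q =
     (uf (pd i f) ?q * uf g ?q + uf f ?q * uf (pd i g) ?q) - (uf (pd i h) ?q * uf k ?q + uf h ?q * uf (pd i k) ?q)"
    unfolding pd_uf by (simp add: DERIV_imp_deriv sl_def)
  then show ?thesis by simp
qed

lemma pd1: "pdx = pd 1" and pd2: "pdy = pd 2" and pd3: "pdz = pd 3" and pd0: "pdt = pd 0"
  by (simp_all add: pd_def fun_eq_iff)

lemma SF_diff: assumes A: "f \<in> SF \<Omega> \<alpha>" and B: "g \<in> SF \<Omega> \<alpha>" shows "(\<lambda>t x y z. f t x y z - g t x y z) \<in> SF \<Omega> \<alpha>"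
  by (rule SF.agr[OF SF.add[OF A SF.mul[OF SF.cst[of "-1"] B]]]) (auto simp: uf_def split: prod.split)
lemma SF_diff_old: "f \<in> SF \<Omega> \<alpha> \<Longrightarrow> g \<in> SF \<Omega> \<alpha> \<Longrightarrow> (\<lambda>t x y z. f t x y z - g t x y z) \<in> SF \<Omega> \<alpha>"
  using SF_diff by blast
lemma SF_uminus: "f \<in> SF \<Omega> \<alpha> \<Longrightarrow> (\<lambda>t x y z. - f t x y z) \<in> SF \<Omega> \<alpha>"
  by (rule SF.agr[OF SF.mul[OF SF.cst[of "-1"]]]) (auto simp: uf_def split: prod.split)
lemma SF_div: "f \<in> SF \<Omega> \<alpha> \<Longrightarrow> g \<in> SF \<Omega> \<alpha> \<Longrightarrow> \<forall>q\<in>\<Omega>. uf g q \<noteq> 0 \<Longrightarrow> (\<lambda>t x y z. f t x y z / g t x y z) \<in> SF \<Omega> \<alpha>"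
  by (rule SF.agr[OF SF.mul[OF _ SF.inv]]) (auto simp: divide_inverse uf_def split: prod.split)
lemma SF_pow: "f \<in> SF \<Omega> \<alpha> \<Longrightarrow> (\<lambda>t x y z. f t x y z ^ n) \<in> SF \<Omega> \<alpha>"
proof (induction n)
  case 0 then show ?case using SF.cst[of 1] by simp
next
  case (Suc n) then show ?case using SF.mul[OF Suc.prems Suc.IH] by simp
qed
lemma SF_t0: "(\<lambda>t x y z. \<alpha> t) \<in> SF \<Omega> \<alpha>" using SF.tn[of 0] by simp
lemma SF_t1: "(\<lambda>t x y z. deriv \<alpha> t) \<in> SF \<Omega> \<alpha>" using SF.tn[of 1] by simp
lemma SF_t2: "(\<lambda>t x y z. deriv (deriv \<alpha>) t) \<in> SF \<Omega> \<alpha>" using SF.tn[of 2] by (simp add: numeral_2_eq_2)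
lemma SF_t3: "(\<lambda>t x y z. deriv (deriv (deriv \<alpha>)) t) \<in> SF \<Omega> \<alpha>" using SF.tn[of 3] by (simp add: numeral_3_eq_3)

lemmas SF_intros = SF.cst SF.px SF.py SF.pz SF_t0 SF_t1 SF_t2 SF_t3 SF.add SF_diff SF.mul SF_uminus SF_pow SF.sin SF.cos

locale mhd =
  fixes \<alpha> :: "real \<Rightarrow> real" and I :: "real set" and \<nu> \<mu> \<rho> a b :: real
  assumes Iopen: "open I" and sm: "smooth1 I \<alpha>" and nz: "\<forall>t\<in>I. deriv \<alpha> t \<noteq> 0" and rpos: "\<rho> > 0"
begin

definition kap :: "real \<Rightarrow> real" where
  "kap t = deriv (deriv \<alpha>) t / (2 * deriv \<alpha> t) + \<mu> * a * b / (4 * deriv \<alpha> t)"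
definition kapd :: "real \<Rightarrow> real" where
  "kapd t = deriv (deriv (deriv \<alpha>)) t / (2 * deriv \<alpha> t) - (deriv (deriv \<alpha>) t)^2 / (2 * (deriv \<alpha> t)^2)
     - \<mu> * a * b * deriv (deriv \<alpha>) t / (4 * (deriv \<alpha> t)^2)"
definition Xf :: sfield where "Xf = (\<lambda>t x y z. x * cos (\<alpha> t) + y * sin (\<alpha> t))"
definition Yf :: sfield where "Yf = (\<lambda>t x y z. - x * sin (\<alpha> t) + y * cos (\<alpha> t))"
definition Om :: "(real\<times>real\<times>real\<times>real) set" where "Om = {(t, x, y, z). t \<in> I \<and> Xf t x y z \<noteq> 0}"

lemma kap_SF: "(\<lambda>t x y z. kap t) \<in> SF Om \<alpha>"
  unfolding kap_def
  by (intro SF_intros SF_div) (auto simp: Om_def nz cmp_def)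
lemma kapd_SF: "(\<lambda>t x y z. kapd t) \<in> SF Om \<alpha>"
  unfolding kapd_def
  by (intro SF_intros SF_div) (auto simp: Om_def nz cmp_def)
lemma Xf_SF: "(\<lambda>t x y z. Xf t x y z) \<in> SF Om \<alpha>"
  unfolding Xf_def by (intro SF_intros)
lemma Yf_SF: "(\<lambda>t x y z. Yf t x y z) \<in> SF Om \<alpha>"
  unfolding Yf_def by (intro SF_intros)

lemma Om_open: "open Om"
proof -
  let ?S = "{q::real\<times>real\<times>real\<times>real. fst q \<in> I}"
  have hS: "\<forall>q\<in>?S. \<forall>n. (deriv^^n) \<alpha> differentiable at (cmp 0 q)"
    using sm by (auto simp: smooth1_def cmp_def split: prod.split)
  have Xs: "(\<lambda>t x y z. Xf t x y z) \<in> SF ?S \<alpha>"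
    unfolding Xf_def by (intro SF_intros)
  have oS: "open ?S" using Iopen open_vimage_fst[of I] by (simp add: vimage_def)
  have "continuous_on ?S (uf (\<lambda>t x y z. Xf t x y z))"
    using SF_main[OF oS hS Xs] by (simp add: good_def)
  then have "open (?S \<inter> uf (\<lambda>t x y z. Xf t x y z) -` (- {0}))"
    using continuous_open_preimage[OF _ oS, of _ "-{0}"] by auto
  moreover have "?S \<inter> uf (\<lambda>t x y z. Xf t x y z) -` (- {0}) = Om"
    by (auto simp: Om_def uf_def split: prod.split)
  ultimately show ?thesis by simp
qed

lemma h\<alpha>: "\<forall>q\<in>Om. \<forall>n. (deriv^^n) \<alpha> differentiable at (cmp 0 q)"
  using sm by (auto simp: smooth1_def cmp_def Om_def split: prod.split)


definition "N = 6 * \<nu>"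
definition U :: sfield where "U = (\<lambda>t x y z. - kap t * x - deriv \<alpha> t * y - 6 * \<nu> * cos (\<alpha> t) / Xf t x y z
                      + 6 * \<nu> * sin (\<alpha> t) * Yf t x y z / (Xf t x y z)\<^sup>2)"
definition V :: sfield where "V = (\<lambda>t x y z. deriv \<alpha> t * x - kap t * y - 6 * \<nu> * sin (\<alpha> t) / Xf t x y z
                      - 6 * \<nu> * cos (\<alpha> t) * Yf t x y z / (Xf t x y z)\<^sup>2)"
definition W :: sfield where "W = (\<lambda>t x y z. 2 * kap t * z)"
definition HA :: sfield where "HA = (\<lambda>t x y z. - (a * Xf t x y z + b * Yf t x y z) * sin (\<alpha> t))"
definition HB :: sfield where "HB = (\<lambda>t x y z. (a * Xf t x y z + b * Yf t x y z) * cos (\<alpha> t))"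
definition HC :: sfield where "HC = (\<lambda>t x y z. - b * z)"
definition P :: sfield where "P = (\<lambda>t x y z. \<rho> * (- (12 * \<nu>\<^sup>2) / (Xf t x y z)^2
   + ((deriv \<alpha> t)^2 + kapd t - (kap t)^2 + \<mu> * a^2) * (Xf t x y z)^2 / 2
   + ((deriv \<alpha> t)^2 + kapd t - (kap t)^2) * (Yf t x y z)^2 / 2
   + \<mu> * a * b * Xf t x y z * Yf t x y z / 2 + 2 * (6 * \<nu>) * deriv \<alpha> t * Yf t x y z / Xf t x y z
   - (kapd t + 2 * (kap t)^2) * z^2))"

definition UXf :: sfield where "UXf = (\<lambda>t x y z. - kap t + 6 * \<nu> * ((cos (\<alpha> t))^2 - (sin (\<alpha> t))^2) / (Xf t x y z)^2
   - 2 * (6 * \<nu>) * sin (\<alpha> t) * cos (\<alpha> t) * Yf t x y z / (Xf t x y z)^3)"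
definition UYf :: sfield where "UYf = (\<lambda>t x y z. - deriv \<alpha> t + 2 * (6 * \<nu>) * sin (\<alpha> t) * cos (\<alpha> t) / (Xf t x y z)^2
   - 2 * (6 * \<nu>) * (sin (\<alpha> t))^2 * Yf t x y z / (Xf t x y z)^3)"
definition VXf :: sfield where "VXf = (\<lambda>t x y z. deriv \<alpha> t + 2 * (6 * \<nu>) * sin (\<alpha> t) * cos (\<alpha> t) / (Xf t x y z)^2
   + 2 * (6 * \<nu>) * (cos (\<alpha> t))^2 * Yf t x y z / (Xf t x y z)^3)"
definition VYf :: sfield where "VYf = (\<lambda>t x y z. - kap t + 6 * \<nu> * ((sin (\<alpha> t))^2 - (cos (\<alpha> t))^2) / (Xf t x y z)^2
   + 2 * (6 * \<nu>) * sin (\<alpha> t) * cos (\<alpha> t) * Yf t x y z / (Xf t x y z)^3)"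

lemmas SF_intros2 = kap_SF kapd_SF Xf_SF Yf_SF SF_intros

lemma Xnz: "(t,x,y,z) \<in> Om \<Longrightarrow> Xf t x y z \<noteq> 0" by (simp add: Om_def)
lemma tI: "(t,x,y,z) \<in> Om \<Longrightarrow> t \<in> I" by (simp add: Om_def)

lemma Xnz_uf: "\<forall>q\<in>Om. uf (\<lambda>t x y z. Xf t x y z) q \<noteq> 0" "\<forall>q\<in>Om. uf (\<lambda>t x y z. (Xf t x y z)^n) q \<noteq> 0"
  by (auto simp: Om_def uf_def)

lemma U_SF: "U \<in> SF Om \<alpha>" unfolding U_def
  by (intro SF_intros2 SF_div Xnz_uf)
lemma V_SF: "V \<in> SF Om \<alpha>" unfolding V_def
  by (intro SF_intros2 SF_div Xnz_uf)
lemma W_SF: "W \<in> SF Om \<alpha>" unfolding W_def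
  by (intro SF_intros2 SF_div Xnz_uf)
lemma HA_SF: "HA \<in> SF Om \<alpha>" unfolding HA_def
  by (intro SF_intros2 SF_div Xnz_uf)
lemma HB_SF: "HB \<in> SF Om \<alpha>" unfolding HB_def
  by (intro SF_intros2 SF_div Xnz_uf)
lemma HC_SF: "HC \<in> SF Om \<alpha>" unfolding HC_def
  by (intro SF_intros2 SF_div Xnz_uf)
lemma P_SF: "P \<in> SF Om \<alpha>" unfolding P_def
  by (intro SF_intros2 SF_div Xnz_uf) (auto simp: Om_def uf_def)
lemma UXf_SF: "UXf \<in> SF Om \<alpha>" unfolding UXf_def
  by (intro SF_intros2 SF_div Xnz_uf)
lemma UYf_SF: "UYf \<in> SF Om \<alpha>" unfolding UYf_def
  by (intro SF_intros2 SF_div Xnz_uf)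
lemma VXf_SF: "VXf \<in> SF Om \<alpha>" unfolding VXf_def
  by (intro SF_intros2 SF_div Xnz_uf)
lemma VYf_SF: "VYf \<in> SF Om \<alpha>" unfolding VYf_def
  by (intro SF_intros2 SF_div Xnz_uf)


lemma dXx: "DERIV (\<lambda>\<sigma>. Xf t \<sigma> y z) x :> cos (\<alpha> t)" by (auto simp: Xf_def intro!: derivative_eq_intros)
lemma dXy: "DERIV (\<lambda>\<sigma>. Xf t x \<sigma> z) y :> sin (\<alpha> t)" by (auto simp: Xf_def intro!: derivative_eq_intros)
lemma dXz: "DERIV (\<lambda>\<sigma>. Xf t x y \<sigma>) z :> 0" by (auto simp: Xf_def intro!: derivative_eq_intros)
lemma dYx: "DERIV (\<lambda>\<sigma>. Yf t \<sigma> y z) x :> - sin (\<alpha> t)" by (auto simp: Yf_def intro!: derivative_eq_intros)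
lemma dYy: "DERIV (\<lambda>\<sigma>. Yf t x \<sigma> z) y :> cos (\<alpha> t)" by (auto simp: Yf_def intro!: derivative_eq_intros)
lemma dYz: "DERIV (\<lambda>\<sigma>. Yf t x y \<sigma>) z :> 0" by (auto simp: Yf_def intro!: derivative_eq_intros)

lemma dA:
  assumes "t \<in> I"
  shows "DERIV \<alpha> t :> deriv \<alpha> t" "DERIV (deriv \<alpha>) t :> deriv (deriv \<alpha>) t"
    "DERIV (deriv (deriv \<alpha>)) t :> deriv (deriv (deriv \<alpha>)) t"
proof -
  have h: "(deriv^^n) \<alpha> differentiable at t" for n using sm assms by (simp add: smooth1_def)
  show "DERIV \<alpha> t :> deriv \<alpha> t" using h[of 0] DERIV_deriv_iff_real_differentiable by simp
  show "DERIV (deriv \<alpha>) t :> deriv (deriv \<alpha>) t" using h[of 1] DERIV_deriv_iff_real_differentiable by simp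
  show "DERIV (deriv (deriv \<alpha>)) t :> deriv (deriv (deriv \<alpha>)) t"
    using h[of 2] DERIV_deriv_iff_real_differentiable by (simp add: numeral_2_eq_2)
qed

lemma dXt: "t \<in> I \<Longrightarrow> DERIV (\<lambda>\<sigma>. Xf \<sigma> x y z) t :> deriv \<alpha> t * Yf t x y z"
  unfolding Xf_def Yf_def
  apply (rule DERIV_cong)
   apply (rule dA derivative_intros | assumption)+
  apply (simp add: algebra_simps)
  done
lemma dYt: "t \<in> I \<Longrightarrow> DERIV (\<lambda>\<sigma>. Yf \<sigma> x y z) t :> - deriv \<alpha> t * Xf t x y z"
  unfolding Xf_def Yf_def
  apply (rule DERIV_cong)
   apply (rule dA derivative_intros | assumption)+
  apply (simp add: algebra_simps)
  done
lemma dkap: "t \<in> I \<Longrightarrow> DERIV kap t :> kapd t"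
proof -
  assume t: "t \<in> I"
  have n: "deriv \<alpha> t \<noteq> 0" using nz t by auto
  have "DERIV (\<lambda>\<sigma>. deriv (deriv \<alpha>) \<sigma> / (2 * deriv \<alpha> \<sigma>) + \<mu> * a * b / (4 * deriv \<alpha> \<sigma>)) t :> kapd t"
    unfolding kapd_def
    apply (rule DERIV_cong)
     apply (rule dA[OF t] derivative_intros | (simp add: n; fail))+
    using n apply (simp add: field_simps)?
    apply (algebra)?
    done
  then show ?thesis unfolding kap_def[abs_def] .
qed


lemma U_x: assumes q: "(t,x,y,z) \<in> Om" shows "pdx U t x y z = UXf t x y z"
proof -
  have n: "Xf t x y z \<noteq> 0" using Xnz[OF q] .
  have "DERIV (\<lambda>\<sigma>. U t \<sigma> y z) x :> UXf t x y z"
    unfolding U_def UXf_def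
    apply (rule DERIV_cong)
     apply (rule dXx dYx derivative_intros | (simp add: n; fail))+
    using n apply (simp add: field_simps)?
    apply (algebra)?
    done
  then show ?thesis by (simp add: pdx_def DERIV_imp_deriv)
qed

lemma U_y: assumes q: "(t,x,y,z) \<in> Om" shows "pdy U t x y z = UYf t x y z"
proof -
  have n: "Xf t x y z \<noteq> 0" using Xnz[OF q] .
  have "DERIV (\<lambda>\<sigma>. U t x \<sigma> z) y :> UYf t x y z"
    unfolding U_def UYf_def
    apply (rule DERIV_cong)
     apply (rule dXy dYy derivative_intros | (simp add: n; fail))+
    using n apply (simp add: field_simps)?
    apply (algebra)?
    done
  then show ?thesis by (simp add: pdy_def DERIV_imp_deriv)
qed

lemma V_x: assumes q: "(t,x,y,z) \<in> Om" shows "pdx V t x y z = VXf t x y z"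
proof -
  have n: "Xf t x y z \<noteq> 0" using Xnz[OF q] .
  have "DERIV (\<lambda>\<sigma>. V t \<sigma> y z) x :> VXf t x y z"
    unfolding V_def VXf_def
    apply (rule DERIV_cong)
     apply (rule dXx dYx derivative_intros | (simp add: n; fail))+
    using n apply (simp add: field_simps)?
    apply (algebra)?
    done
  then show ?thesis by (simp add: pdx_def DERIV_imp_deriv)
qed

lemma V_y: assumes q: "(t,x,y,z) \<in> Om" shows "pdy V t x y z = VYf t x y z"
proof -
  have n: "Xf t x y z \<noteq> 0" using Xnz[OF q] .
  have "DERIV (\<lambda>\<sigma>. V t x \<sigma> z) y :> VYf t x y z"
    unfolding V_def VYf_def
    apply (rule DERIV_cong)
     apply (rule dXy dYy derivative_intros | (simp add: n; fail))+
    using n apply (simp add: field_simps)?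
    apply (algebra)?
    done
  then show ?thesis by (simp add: pdy_def DERIV_imp_deriv)
qed

lemma U_z: "pdz U = (\<lambda>t x y z. 0)" by (simp add: pdz_def U_def Xf_def Yf_def fun_eq_iff)
lemma V_z: "pdz V = (\<lambda>t x y z. 0)" by (simp add: pdz_def V_def Xf_def Yf_def fun_eq_iff)

lemma U_t: assumes q: "(t,x,y,z) \<in> Om" shows "pdt U t x y z =
   - kapd t * x - deriv (deriv \<alpha>) t * y + 2 * (6 * \<nu>) * cos (\<alpha> t) * deriv \<alpha> t * Yf t x y z / (Xf t x y z)^2
   - 2 * (6 * \<nu>) * sin (\<alpha> t) * deriv \<alpha> t * (Yf t x y z)^2 / (Xf t x y z)^3"
proof -
  have n: "Xf t x y z \<noteq> 0" using Xnz[OF q] .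
  have t: "t \<in> I" using tI[OF q] .
  have "DERIV (\<lambda>\<sigma>. U \<sigma> x y z) t :> - kapd t * x - deriv (deriv \<alpha>) t * y + 2 * (6 * \<nu>) * cos (\<alpha> t) * deriv \<alpha> t * Yf t x y z / (Xf t x y z)^2
   - 2 * (6 * \<nu>) * sin (\<alpha> t) * deriv \<alpha> t * (Yf t x y z)^2 / (Xf t x y z)^3"
    unfolding U_def
    apply (rule DERIV_cong)
     apply (rule dXt[OF t] dYt[OF t] dkap[OF t] dA[OF t] derivative_intros | (simp add: n; fail))+
    using n apply (simp add: field_simps)?
    apply (algebra)?
    done
  then show ?thesis by (simp add: pdt_def DERIV_imp_deriv)
qed

lemma V_t: assumes q: "(t,x,y,z) \<in> Om" shows "pdt V t x y z =
   deriv (deriv \<alpha>) t * x - kapd t * y + 2 * (6 * \<nu>) * sin (\<alpha> t) * deriv \<alpha> t * Yf t x y z / (Xf t x y z)^2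
   + 2 * (6 * \<nu>) * cos (\<alpha> t) * deriv \<alpha> t * (Yf t x y z)^2 / (Xf t x y z)^3"
proof -
  have n: "Xf t x y z \<noteq> 0" using Xnz[OF q] .
  have t: "t \<in> I" using tI[OF q] .
  have "DERIV (\<lambda>\<sigma>. V \<sigma> x y z) t :> deriv (deriv \<alpha>) t * x - kapd t * y + 2 * (6 * \<nu>) * sin (\<alpha> t) * deriv \<alpha> t * Yf t x y z / (Xf t x y z)^2
   + 2 * (6 * \<nu>) * cos (\<alpha> t) * deriv \<alpha> t * (Yf t x y z)^2 / (Xf t x y z)^3"
    unfolding V_def
    apply (rule DERIV_cong)
     apply (rule dXt[OF t] dYt[OF t] dkap[OF t] dA[OF t] derivative_intros | (simp add: n; fail))+
    using n apply (simp add: field_simps)?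
    apply (algebra)?
    done
  then show ?thesis by (simp add: pdt_def DERIV_imp_deriv)
qed

lemma UXX: assumes q: "(t,x,y,z) \<in> Om" shows "pdx UXf t x y z = -2 * (6 * \<nu>) * cos (\<alpha> t) * (cos (\<alpha> t)^2 - sin (\<alpha> t)^2) / (Xf t x y z)^3 + 2 * (6 * \<nu>) * sin (\<alpha> t)^2 * cos (\<alpha> t) / (Xf t x y z)^3 + 6 * (6 * \<nu>) * sin (\<alpha> t) * cos (\<alpha> t)^2 * Yf t x y z / (Xf t x y z)^4"
proof -
  have n: "Xf t x y z \<noteq> 0" using Xnz[OF q] .
  have t: "t \<in> I" using tI[OF q] .
  have "DERIV (\<lambda>\<sigma>. UXf t \<sigma> y z) x :> -2 * (6 * \<nu>) * cos (\<alpha> t) * (cos (\<alpha> t)^2 - sin (\<alpha> t)^2) / (Xf t x y z)^3 + 2 * (6 * \<nu>) * sin (\<alpha> t)^2 * cos (\<alpha> t) / (Xf t x y z)^3 + 6 * (6 * \<nu>) * sin (\<alpha> t) * cos (\<alpha> t)^2 * Yf t x y z / (Xf t x y z)^4"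
    unfolding UXf_def 
    apply (rule DERIV_cong)
     apply (rule dXx dYx derivative_intros | (simp add: n; fail))+
    using n apply (simp add: field_simps)?
    apply (algebra)?
    done
  then show ?thesis by (simp add: pdx_def DERIV_imp_deriv)
qed

lemma UYY: assumes q: "(t,x,y,z) \<in> Om" shows "pdy UYf t x y z = -6 * (6 * \<nu>) * sin (\<alpha> t)^2 * cos (\<alpha> t) / (Xf t x y z)^3 + 6 * (6 * \<nu>) * sin (\<alpha> t)^3 * Yf t x y z / (Xf t x y z)^4"
proof -
  have n: "Xf t x y z \<noteq> 0" using Xnz[OF q] .
  have t: "t \<in> I" using tI[OF q] .
  have "DERIV (\<lambda>\<sigma>. UYf t x \<sigma> z) y :> -6 * (6 * \<nu>) * sin (\<alpha> t)^2 * cos (\<alpha> t) / (Xf t x y z)^3 + 6 * (6 * \<nu>) * sin (\<alpha> t)^3 * Yf t x y z / (Xf t x y z)^4"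
    unfolding UYf_def 
    apply (rule DERIV_cong)
     apply (rule dXy dYy derivative_intros | (simp add: n; fail))+
    using n apply (simp add: field_simps)?
    apply (algebra)?
    done
  then show ?thesis by (simp add: pdy_def DERIV_imp_deriv)
qed

lemma VXX: assumes q: "(t,x,y,z) \<in> Om" shows "pdx VXf t x y z = -6 * (6 * \<nu>) * sin (\<alpha> t) * cos (\<alpha> t)^2 / (Xf t x y z)^3 - 6 * (6 * \<nu>) * cos (\<alpha> t)^3 * Yf t x y z / (Xf t x y z)^4"
proof -
  have n: "Xf t x y z \<noteq> 0" using Xnz[OF q] .
  have t: "t \<in> I" using tI[OF q] .
  have "DERIV (\<lambda>\<sigma>. VXf t \<sigma> y z) x :> -6 * (6 * \<nu>) * sin (\<alpha> t) * cos (\<alpha> t)^2 / (Xf t x y z)^3 - 6 * (6 * \<nu>) * cos (\<alpha> t)^3 * Yf t x y z / (Xf t x y z)^4"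
    unfolding VXf_def 
    apply (rule DERIV_cong)
     apply (rule dXx dYx derivative_intros | (simp add: n; fail))+
    using n apply (simp add: field_simps)?
    apply (algebra)?
    done
  then show ?thesis by (simp add: pdx_def DERIV_imp_deriv)
qed

lemma VYY: assumes q: "(t,x,y,z) \<in> Om" shows "pdy VYf t x y z = -2 * (6 * \<nu>) * (sin (\<alpha> t)^2 - cos (\<alpha> t)^2) * sin (\<alpha> t) / (Xf t x y z)^3 + 2 * (6 * \<nu>) * sin (\<alpha> t) * cos (\<alpha> t)^2 / (Xf t x y z)^3 - 6 * (6 * \<nu>) * sin (\<alpha> t)^2 * cos (\<alpha> t) * Yf t x y z / (Xf t x y z)^4"
proof -
  have n: "Xf t x y z \<noteq> 0" using Xnz[OF q] .
  have t: "t \<in> I" using tI[OF q] .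
  have "DERIV (\<lambda>\<sigma>. VYf t x \<sigma> z) y :> -2 * (6 * \<nu>) * (sin (\<alpha> t)^2 - cos (\<alpha> t)^2) * sin (\<alpha> t) / (Xf t x y z)^3 + 2 * (6 * \<nu>) * sin (\<alpha> t) * cos (\<alpha> t)^2 / (Xf t x y z)^3 - 6 * (6 * \<nu>) * sin (\<alpha> t)^2 * cos (\<alpha> t) * Yf t x y z / (Xf t x y z)^4"
    unfolding VYf_def 
    apply (rule DERIV_cong)
     apply (rule dXy dYy derivative_intros | (simp add: n; fail))+
    using n apply (simp add: field_simps)?
    apply (algebra)?
    done
  then show ?thesis by (simp add: pdy_def DERIV_imp_deriv)
qed

lemma P_x: assumes q: "(t,x,y,z) \<in> Om" shows "pdx P t x y z = \<rho> * (24 * \<nu>^2 * cos (\<alpha> t) / (Xf t x y z)^3 + (((deriv \<alpha> t)^2 + kapd t - (kap t)^2) + \<mu> * a^2) * Xf t x y z * cos (\<alpha> t) - ((deriv \<alpha> t)^2 + kapd t - (kap t)^2) * Yf t x y z * sin (\<alpha> t) + \<mu> * a * b / 2 * (cos (\<alpha> t) * Yf t x y z - sin (\<alpha> t) * Xf t x y z) + 12 * \<nu> * deriv \<alpha> t * (- sin (\<alpha> t) / Xf t x y z - Yf t x y z * cos (\<alpha> t) / (Xf t x y z)^2))"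
proof -
  have n: "Xf t x y z \<noteq> 0" using Xnz[OF q] .
  have t: "t \<in> I" using tI[OF q] .
  have "DERIV (\<lambda>\<sigma>. P t \<sigma> y z) x :> \<rho> * (24 * \<nu>^2 * cos (\<alpha> t) / (Xf t x y z)^3 + (((deriv \<alpha> t)^2 + kapd t - (kap t)^2) + \<mu> * a^2) * Xf t x y z * cos (\<alpha> t) - ((deriv \<alpha> t)^2 + kapd t - (kap t)^2) * Yf t x y z * sin (\<alpha> t) + \<mu> * a * b / 2 * (cos (\<alpha> t) * Yf t x y z - sin (\<alpha> t) * Xf t x y z) + 12 * \<nu> * deriv \<alpha> t * (- sin (\<alpha> t) / Xf t x y z - Yf t x y z * cos (\<alpha> t) / (Xf t x y z)^2))"
    unfolding P_def 
    apply (rule DERIV_cong)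
     apply (rule dXx dYx derivative_intros | (simp add: n; fail))+
    using n apply (simp add: field_simps)?
    apply (algebra)?
    done
  then show ?thesis by (simp add: pdx_def DERIV_imp_deriv)
qed

lemma P_y: assumes q: "(t,x,y,z) \<in> Om" shows "pdy P t x y z = \<rho> * (24 * \<nu>^2 * sin (\<alpha> t) / (Xf t x y z)^3 + (((deriv \<alpha> t)^2 + kapd t - (kap t)^2) + \<mu> * a^2) * Xf t x y z * sin (\<alpha> t) + ((deriv \<alpha> t)^2 + kapd t - (kap t)^2) * Yf t x y z * cos (\<alpha> t) + \<mu> * a * b / 2 * (sin (\<alpha> t) * Yf t x y z + cos (\<alpha> t) * Xf t x y z) + 12 * \<nu> * deriv \<alpha> t * (cos (\<alpha> t) / Xf t x y z - Yf t x y z * sin (\<alpha> t) / (Xf t x y z)^2))"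
proof -
  have n: "Xf t x y z \<noteq> 0" using Xnz[OF q] .
  have t: "t \<in> I" using tI[OF q] .
  have "DERIV (\<lambda>\<sigma>. P t x \<sigma> z) y :> \<rho> * (24 * \<nu>^2 * sin (\<alpha> t) / (Xf t x y z)^3 + (((deriv \<alpha> t)^2 + kapd t - (kap t)^2) + \<mu> * a^2) * Xf t x y z * sin (\<alpha> t) + ((deriv \<alpha> t)^2 + kapd t - (kap t)^2) * Yf t x y z * cos (\<alpha> t) + \<mu> * a * b / 2 * (sin (\<alpha> t) * Yf t x y z + cos (\<alpha> t) * Xf t x y z) + 12 * \<nu> * deriv \<alpha> t * (cos (\<alpha> t) / Xf t x y z - Yf t x y z * sin (\<alpha> t) / (Xf t x y z)^2))"
    unfolding P_def 
    apply (rule DERIV_cong)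
     apply (rule dXy dYy derivative_intros | (simp add: n; fail))+
    using n apply (simp add: field_simps)?
    apply (algebra)?
    done
  then show ?thesis by (simp add: pdy_def DERIV_imp_deriv)
qed

lemma P_z: assumes q: "(t,x,y,z) \<in> Om" shows "pdz P t x y z = \<rho> * (- (kapd t + 2 * (kap t)^2) * 2 * z)"
proof -
  have n: "Xf t x y z \<noteq> 0" using Xnz[OF q] .
  have t: "t \<in> I" using tI[OF q] .
  have "DERIV (\<lambda>\<sigma>. P t x y \<sigma>) z :> \<rho> * (- (kapd t + 2 * (kap t)^2) * 2 * z)"
    unfolding P_def 
    apply (rule DERIV_cong)
     apply (rule dXz dYz derivative_intros | (simp add: n; fail))+
    using n apply (simp add: field_simps)?
    apply (algebra)?
    done
  then show ?thesis by (simp add: pdz_def DERIV_imp_deriv)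
qed

lemma W_t: assumes q: "(t,x,y,z) \<in> Om" shows "pdt W t x y z = 2 * kapd t * z"
proof -
  have n: "Xf t x y z \<noteq> 0" using Xnz[OF q] .
  have t: "t \<in> I" using tI[OF q] .
  have "DERIV (\<lambda>\<sigma>. W \<sigma> x y z) t :> 2 * kapd t * z"
    unfolding W_def 
    apply (rule DERIV_cong)
     apply (rule dXt[OF t] dYt[OF t] dkap[OF t] dA[OF t] derivative_intros | (simp add: n; fail))+
    using n apply (simp add: field_simps)?
    apply (algebra)?
    done
  then show ?thesis by (simp add: pdt_def DERIV_imp_deriv)
qed

lemma HA_t: assumes q: "(t,x,y,z) \<in> Om" shows "pdt HA t x y z = - (a * deriv \<alpha> t * Yf t x y z - b * deriv \<alpha> t * Xf t x y z) * sin (\<alpha> t) - (a * Xf t x y z + b * Yf t x y z) * cos (\<alpha> t) * deriv \<alpha> t"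
proof -
  have n: "Xf t x y z \<noteq> 0" using Xnz[OF q] .
  have t: "t \<in> I" using tI[OF q] .
  have "DERIV (\<lambda>\<sigma>. HA \<sigma> x y z) t :> - (a * deriv \<alpha> t * Yf t x y z - b * deriv \<alpha> t * Xf t x y z) * sin (\<alpha> t) - (a * Xf t x y z + b * Yf t x y z) * cos (\<alpha> t) * deriv \<alpha> t"
    unfolding HA_def 
    apply (rule DERIV_cong)
     apply (rule dXt[OF t] dYt[OF t] dkap[OF t] dA[OF t] derivative_intros | (simp add: n; fail))+
    using n apply (simp add: field_simps)?
    apply (algebra)?
    done
  then show ?thesis by (simp add: pdt_def DERIV_imp_deriv)
qed

lemma HB_t: assumes q: "(t,x,y,z) \<in> Om" shows "pdt HB t x y z = (a * deriv \<alpha> t * Yf t x y z - b * deriv \<alpha> t * Xf t x y z) * cos (\<alpha> t) - (a * Xf t x y z + b * Yf t x y z) * sin (\<alpha> t) * deriv \<alpha> t"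
proof -
  have n: "Xf t x y z \<noteq> 0" using Xnz[OF q] .
  have t: "t \<in> I" using tI[OF q] .
  have "DERIV (\<lambda>\<sigma>. HB \<sigma> x y z) t :> (a * deriv \<alpha> t * Yf t x y z - b * deriv \<alpha> t * Xf t x y z) * cos (\<alpha> t) - (a * Xf t x y z + b * Yf t x y z) * sin (\<alpha> t) * deriv \<alpha> t"
    unfolding HB_def 
    apply (rule DERIV_cong)
     apply (rule dXt[OF t] dYt[OF t] dkap[OF t] dA[OF t] derivative_intros | (simp add: n; fail))+
    using n apply (simp add: field_simps)?
    apply (algebra)?
    done
  then show ?thesis by (simp add: pdt_def DERIV_imp_deriv)
qed

lemma W_x: "pdx W = (\<lambda>t x y z. 0)"
proof (intro ext)
  fix t x y z
  have "DERIV (\<lambda>\<sigma>. W t \<sigma> y z) x :> 0"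
    unfolding W_def
    apply (rule DERIV_cong)
     apply (rule dXx dYx derivative_intros)+
    apply (simp add: algebra_simps)
    done
  then show "pdx W t x y z = 0" by (simp add: pdx_def DERIV_imp_deriv)
qed

lemma W_y: "pdy W = (\<lambda>t x y z. 0)"
proof (intro ext)
  fix t x y z
  have "DERIV (\<lambda>\<sigma>. W t x \<sigma> z) y :> 0"
    unfolding W_def
    apply (rule DERIV_cong)
     apply (rule dXy dYy derivative_intros)+
    apply (simp add: algebra_simps)
    done
  then show "pdy W t x y z = 0" by (simp add: pdy_def DERIV_imp_deriv)
qed

lemma W_z: "pdz W = (\<lambda>t x y z. 2 * kap t)"
proof (intro ext)
  fix t x y z
  have "DERIV (\<lambda>\<sigma>. W t x y \<sigma>) z :> 2 * kap t"
    unfolding W_def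
    apply (rule DERIV_cong)
     apply (rule dXz dYz derivative_intros)+
    apply (simp add: algebra_simps)
    done
  then show "pdz W t x y z = 2 * kap t" by (simp add: pdz_def DERIV_imp_deriv)
qed

lemma HA_x: "pdx HA = (\<lambda>t x y z. - (a * cos (\<alpha> t) - b * sin (\<alpha> t)) * sin (\<alpha> t))"
proof (intro ext)
  fix t x y z
  have "DERIV (\<lambda>\<sigma>. HA t \<sigma> y z) x :> - (a * cos (\<alpha> t) - b * sin (\<alpha> t)) * sin (\<alpha> t)"
    unfolding HA_def
    apply (rule DERIV_cong)
     apply (rule dXx dYx derivative_intros)+
    apply (simp add: algebra_simps)
    done
  then show "pdx HA t x y z = - (a * cos (\<alpha> t) - b * sin (\<alpha> t)) * sin (\<alpha> t)" by (simp add: pdx_def DERIV_imp_deriv)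
qed

lemma HA_y: "pdy HA = (\<lambda>t x y z. - (a * sin (\<alpha> t) + b * cos (\<alpha> t)) * sin (\<alpha> t))"
proof (intro ext)
  fix t x y z
  have "DERIV (\<lambda>\<sigma>. HA t x \<sigma> z) y :> - (a * sin (\<alpha> t) + b * cos (\<alpha> t)) * sin (\<alpha> t)"
    unfolding HA_def
    apply (rule DERIV_cong)
     apply (rule dXy dYy derivative_intros)+
    apply (simp add: algebra_simps)
    done
  then show "pdy HA t x y z = - (a * sin (\<alpha> t) + b * cos (\<alpha> t)) * sin (\<alpha> t)" by (simp add: pdy_def DERIV_imp_deriv)
qed

lemma HA_z: "pdz HA = (\<lambda>t x y z. 0)"
proof (intro ext)
  fix t x y z
  have "DERIV (\<lambda>\<sigma>. HA t x y \<sigma>) z :> 0"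
    unfolding HA_def
    apply (rule DERIV_cong)
     apply (rule dXz dYz derivative_intros)+
    apply (simp add: algebra_simps)
    done
  then show "pdz HA t x y z = 0" by (simp add: pdz_def DERIV_imp_deriv)
qed

lemma HB_x: "pdx HB = (\<lambda>t x y z. (a * cos (\<alpha> t) - b * sin (\<alpha> t)) * cos (\<alpha> t))"
proof (intro ext)
  fix t x y z
  have "DERIV (\<lambda>\<sigma>. HB t \<sigma> y z) x :> (a * cos (\<alpha> t) - b * sin (\<alpha> t)) * cos (\<alpha> t)"
    unfolding HB_def
    apply (rule DERIV_cong)
     apply (rule dXx dYx derivative_intros)+
    apply (simp add: algebra_simps)
    done
  then show "pdx HB t x y z = (a * cos (\<alpha> t) - b * sin (\<alpha> t)) * cos (\<alpha> t)" by (simp add: pdx_def DERIV_imp_deriv)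
qed

lemma HB_y: "pdy HB = (\<lambda>t x y z. (a * sin (\<alpha> t) + b * cos (\<alpha> t)) * cos (\<alpha> t))"
proof (intro ext)
  fix t x y z
  have "DERIV (\<lambda>\<sigma>. HB t x \<sigma> z) y :> (a * sin (\<alpha> t) + b * cos (\<alpha> t)) * cos (\<alpha> t)"
    unfolding HB_def
    apply (rule DERIV_cong)
     apply (rule dXy dYy derivative_intros)+
    apply (simp add: algebra_simps)
    done
  then show "pdy HB t x y z = (a * sin (\<alpha> t) + b * cos (\<alpha> t)) * cos (\<alpha> t)" by (simp add: pdy_def DERIV_imp_deriv)
qed

lemma HB_z: "pdz HB = (\<lambda>t x y z. 0)"
proof (intro ext)
  fix t x y z
  have "DERIV (\<lambda>\<sigma>. HB t x y \<sigma>) z :> 0"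
    unfolding HB_def
    apply (rule DERIV_cong)
     apply (rule dXz dYz derivative_intros)+
    apply (simp add: algebra_simps)
    done
  then show "pdz HB t x y z = 0" by (simp add: pdz_def DERIV_imp_deriv)
qed

lemma HC_x: "pdx HC = (\<lambda>t x y z. 0)"
proof (intro ext)
  fix t x y z
  have "DERIV (\<lambda>\<sigma>. HC t \<sigma> y z) x :> 0"
    unfolding HC_def
    apply (rule DERIV_cong)
     apply (rule dXx dYx derivative_intros)+
    apply (simp add: algebra_simps)
    done
  then show "pdx HC t x y z = 0" by (simp add: pdx_def DERIV_imp_deriv)
qed

lemma HC_y: "pdy HC = (\<lambda>t x y z. 0)"
proof (intro ext)
  fix t x y z
  have "DERIV (\<lambda>\<sigma>. HC t x \<sigma> z) y :> 0"
    unfolding HC_def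
    apply (rule DERIV_cong)
     apply (rule dXy dYy derivative_intros)+
    apply (simp add: algebra_simps)
    done
  then show "pdy HC t x y z = 0" by (simp add: pdy_def DERIV_imp_deriv)
qed

lemma HC_z: "pdz HC = (\<lambda>t x y z. - b)"
proof (intro ext)
  fix t x y z
  have "DERIV (\<lambda>\<sigma>. HC t x y \<sigma>) z :> - b"
    unfolding HC_def
    apply (rule DERIV_cong)
     apply (rule dXz dYz derivative_intros)+
    apply (simp add: algebra_simps)
    done
  then show "pdz HC t x y z = - b" by (simp add: pdz_def DERIV_imp_deriv)
qed

lemma HC_t: "pdt HC = (\<lambda>t x y z. 0)"
proof (intro ext)
  fix t x y z
  have "DERIV (\<lambda>\<sigma>. HC \<sigma> x y z) t :> 0"
    unfolding HC_def
    apply (rule DERIV_cong)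
     apply (rule dXz dYz derivative_intros)+
    apply (simp add: algebra_simps)
    done
  then show "pdt HC t x y z = 0" by (simp add: pdt_def DERIV_imp_deriv)
qed


lemma U_xx: assumes q: "(t,x,y,z) \<in> Om" shows "pdx (pdx U) t x y z = pdx UXf t x y z"
proof -
  have "uf (pd 1 (pdx U)) (t,x,y,z) = uf (pd 1 UXf) (t,x,y,z)"
    by (rule pd_agree[OF Om_open _ q]) (auto simp: uf_def U_x split: prod.split)
  then show ?thesis by (simp add: pd1)
qed
lemma U_yy: assumes q: "(t,x,y,z) \<in> Om" shows "pdy (pdy U) t x y z = pdy UYf t x y z"
proof -
  have "uf (pd 2 (pdy U)) (t,x,y,z) = uf (pd 2 UYf) (t,x,y,z)"
    by (rule pd_agree[OF Om_open _ q]) (auto simp: uf_def U_y split: prod.split)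
  then show ?thesis by (simp add: pd2)
qed
lemma V_xx: assumes q: "(t,x,y,z) \<in> Om" shows "pdx (pdx V) t x y z = pdx VXf t x y z"
proof -
  have "uf (pd 1 (pdx V)) (t,x,y,z) = uf (pd 1 VXf) (t,x,y,z)"
    by (rule pd_agree[OF Om_open _ q]) (auto simp: uf_def V_x split: prod.split)
  then show ?thesis by (simp add: pd1)
qed
lemma V_yy: assumes q: "(t,x,y,z) \<in> Om" shows "pdy (pdy V) t x y z = pdy VYf t x y z"
proof -
  have "uf (pd 2 (pdy V)) (t,x,y,z) = uf (pd 2 VYf) (t,x,y,z)"
    by (rule pd_agree[OF Om_open _ q]) (auto simp: uf_def V_y split: prod.split)
  then show ?thesis by (simp add: pd2)
qed

lemma cr_x: "f \<in> SF Om \<alpha> \<Longrightarrow> g \<in> SF Om \<alpha> \<Longrightarrow> h \<in> SF Om \<alpha> \<Longrightarrow> k \<in> SF Om \<alpha> \<Longrightarrow> (t,x,y,z) \<in> Om \<Longrightarrow>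
  pdx (\<lambda>t x y z. f t x y z * g t x y z - h t x y z * k t x y z) t x y z =
    (pdx f t x y z * g t x y z + f t x y z * pdx g t x y z) - (pdx h t x y z * k t x y z + h t x y z * pdx k t x y z)"
  unfolding pd1 by (rule pd_cr[OF Om_open h\<alpha>])
lemma cr_y: "f \<in> SF Om \<alpha> \<Longrightarrow> g \<in> SF Om \<alpha> \<Longrightarrow> h \<in> SF Om \<alpha> \<Longrightarrow> k \<in> SF Om \<alpha> \<Longrightarrow> (t,x,y,z) \<in> Om \<Longrightarrow>
  pdy (\<lambda>t x y z. f t x y z * g t x y z - h t x y z * k t x y z) t x y z =
    (pdy f t x y z * g t x y z + f t x y z * pdy g t x y z) - (pdy h t x y z * k t x y z + h t x y z * pdy k t x y z)"
  unfolding pd2 by (rule pd_cr[OF Om_open h\<alpha>])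
lemma cr_z: "f \<in> SF Om \<alpha> \<Longrightarrow> g \<in> SF Om \<alpha> \<Longrightarrow> h \<in> SF Om \<alpha> \<Longrightarrow> k \<in> SF Om \<alpha> \<Longrightarrow> (t,x,y,z) \<in> Om \<Longrightarrow>
  pdz (\<lambda>t x y z. f t x y z * g t x y z - h t x y z * k t x y z) t x y z =
    (pdz f t x y z * g t x y z + f t x y z * pdz g t x y z) - (pdz h t x y z * k t x y z + h t x y z * pdz k t x y z)"
  unfolding pd3 by (rule pd_cr[OF Om_open h\<alpha>])

lemma pd_zero[simp]: "pdx (\<lambda>t x y z. c) = (\<lambda>t x y z. 0)" "pdy (\<lambda>t x y z. c) = (\<lambda>t x y z. 0)"
   "pdz (\<lambda>t x y z. c) = (\<lambda>t x y z. 0)" "pdt (\<lambda>t x y z. c) = (\<lambda>t x y z. 0)"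
  by (simp_all add: pdx_def pdy_def pdz_def pdt_def)
lemma pd_zero2[simp]: "pdx (\<lambda>t x y z. h t) = (\<lambda>t x y z. 0)" "pdy (\<lambda>t x y z. h t) = (\<lambda>t x y z. 0)"
   "pdz (\<lambda>t x y z. h t) = (\<lambda>t x y z. 0)"
  by (simp_all add: pdx_def pdy_def pdz_def pdt_def)

lemmas SFs = U_SF V_SF W_SF HA_SF HB_SF HC_SF

lemma kr: "t \<in> I \<Longrightarrow> kap t * deriv \<alpha> t = deriv (deriv \<alpha>) t / 2 + \<mu> * a * b / 4"
  using nz by (auto simp: kap_def field_simps)

lemma momu: assumes q: "(t,x,y,z) \<in> Om"
  shows "pdt U t x y z + conv U V W U t x y z
        - \<mu> * cr1 HA HB HC (rot1 HA HB HC) (rot2 HA HB HC) (rot3 HA HB HC) t x y z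
        + (1 / \<rho>) * pdx P t x y z = \<nu> * lap U t x y z"
proof -
  have n: "Xf t x y z \<noteq> 0" using Xnz[OF q] .
  have t: "t \<in> I" using tI[OF q] .
  have r: "\<rho> \<noteq> 0" using rpos by simp
  have cs: "(cos (\<alpha> t))^2 + (sin (\<alpha> t))^2 = 1" by simp
  have k: "kap t * deriv \<alpha> t = deriv (deriv \<alpha>) t / 2 + \<mu> * a * b / 4" using kr[OF t] .
  have xe: "x = cos (\<alpha> t) * Xf t x y z - sin (\<alpha> t) * Yf t x y z"
    unfolding Xf_def Yf_def using cs by algebra
  have ye: "y = sin (\<alpha> t) * Xf t x y z + cos (\<alpha> t) * Yf t x y z"
    unfolding Xf_def Yf_def using cs by algebra
  obtain X0 where X0: "Xf t x y z = X0" by blast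
  obtain Y0 where Y0: "Yf t x y z = Y0" by blast
  have xe': "x = cos (\<alpha> t) * X0 - sin (\<alpha> t) * Y0" using xe X0 Y0 by simp
  have ye': "y = sin (\<alpha> t) * X0 + cos (\<alpha> t) * Y0" using ye X0 Y0 by simp
  have n': "X0 \<noteq> 0" using n X0 by simp
  obtain c where C: "cos (\<alpha> t) = c" by blast
  obtain s where S: "sin (\<alpha> t) = s" by blast
  obtain w1 where W1: "deriv \<alpha> t = w1" by blast
  obtain w2 where W2: "deriv (deriv \<alpha>) t = w2" by blast
  obtain kk where K: "kap t = kk" by blast
  have cs': "c^2 + s^2 = 1" using cs C S by simp
  have k': "kk * w1 = w2 / 2 + \<mu> * a * b / 4" using k K W1 W2 by simp
  show ?thesis
    unfolding conv_def cr1_def rot1_def rot2_def rot3_def lap_def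
    apply (simp only: U_t[OF q] U_x[OF q] U_y[OF q] U_z U_xx[OF q] U_yy[OF q] UXX[OF q] UYY[OF q] P_x[OF q]
       HA_x HA_y HA_z HB_x HB_y HB_z HC_x HC_y HC_z)
    apply (simp add: U_def V_def W_def HA_def HB_def HC_def UXf_def UYf_def)
    apply (simp only: X0 Y0)
    apply (simp only: xe' ye')
    apply (simp only: C S W1 W2 K)
    using n' r apply (simp add: field_simps)
    using cs' k' apply algebra
    done
qed

lemma E_divv: assumes q: "(t,x,y,z) \<in> Om"
  shows "pdx U t x y z + pdy V t x y z + pdz W t x y z = 0"
proof -
  have n: "Xf t x y z \<noteq> 0" using Xnz[OF q] .
  have t: "t \<in> I" using tI[OF q] .
  have r: "\<rho> \<noteq> 0" using rpos by simp
  have cs: "(cos (\<alpha> t))^2 + (sin (\<alpha> t))^2 = 1" by simp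
  have k: "kap t * deriv \<alpha> t = deriv (deriv \<alpha>) t / 2 + \<mu> * a * b / 4" using kr[OF t] .
  have xe: "x = cos (\<alpha> t) * Xf t x y z - sin (\<alpha> t) * Yf t x y z"
    unfolding Xf_def Yf_def using cs by algebra
  have ye: "y = sin (\<alpha> t) * Xf t x y z + cos (\<alpha> t) * Yf t x y z"
    unfolding Xf_def Yf_def using cs by algebra
  obtain X0 where X0: "Xf t x y z = X0" by blast
  obtain Y0 where Y0: "Yf t x y z = Y0" by blast
  have xe': "x = cos (\<alpha> t) * X0 - sin (\<alpha> t) * Y0" using xe X0 Y0 by simp
  have ye': "y = sin (\<alpha> t) * X0 + cos (\<alpha> t) * Y0" using ye X0 Y0 by simp
  have n': "X0 \<noteq> 0" using n X0 by simp
  obtain c where C: "cos (\<alpha> t) = c" by blast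
  obtain s where S: "sin (\<alpha> t) = s" by blast
  obtain w1 where W1: "deriv \<alpha> t = w1" by blast
  obtain w2 where W2: "deriv (deriv \<alpha>) t = w2" by blast
  obtain kk where K: "kap t = kk" by blast
  have cs': "c^2 + s^2 = 1" using cs C S by simp
  have k': "kk * w1 = w2 / 2 + \<mu> * a * b / 4" using k K W1 W2 by simp
  show ?thesis
    unfolding conv_def cr1_def cr2_def cr3_def rot1_def rot2_def rot3_def lap_def
    apply (simp only: U_x[OF q] V_y[OF q] HA_x HA_y HA_z HB_x HB_y HB_z HC_x HC_y HC_z HC_t W_x W_y W_z pd_zero pd_zero2)
    apply (simp add: U_def V_def W_def HA_def HB_def HC_def UXf_def UYf_def VXf_def VYf_def)?
    apply (simp only: X0 Y0)?
    apply (simp only: xe' ye')?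
    apply (simp only: C S W1 W2 K)?
    using n' r apply (simp add: field_simps)?
    using cs' k' apply (algebra)?
    apply (simp add: power2_eq_square)?
    done
qed

lemma E_momv: assumes q: "(t,x,y,z) \<in> Om"
  shows "pdt V t x y z + conv U V W V t x y z
        - \<mu> * cr2 HA HB HC (rot1 HA HB HC) (rot2 HA HB HC) (rot3 HA HB HC) t x y z
        + (1 / \<rho>) * pdy P t x y z = \<nu> * lap V t x y z"
proof -
  have n: "Xf t x y z \<noteq> 0" using Xnz[OF q] .
  have t: "t \<in> I" using tI[OF q] .
  have r: "\<rho> \<noteq> 0" using rpos by simp
  have cs: "(cos (\<alpha> t))^2 + (sin (\<alpha> t))^2 = 1" by simp
  have k: "kap t * deriv \<alpha> t = deriv (deriv \<alpha>) t / 2 + \<mu> * a * b / 4" using kr[OF t] .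
  have xe: "x = cos (\<alpha> t) * Xf t x y z - sin (\<alpha> t) * Yf t x y z"
    unfolding Xf_def Yf_def using cs by algebra
  have ye: "y = sin (\<alpha> t) * Xf t x y z + cos (\<alpha> t) * Yf t x y z"
    unfolding Xf_def Yf_def using cs by algebra
  obtain X0 where X0: "Xf t x y z = X0" by blast
  obtain Y0 where Y0: "Yf t x y z = Y0" by blast
  have xe': "x = cos (\<alpha> t) * X0 - sin (\<alpha> t) * Y0" using xe X0 Y0 by simp
  have ye': "y = sin (\<alpha> t) * X0 + cos (\<alpha> t) * Y0" using ye X0 Y0 by simp
  have n': "X0 \<noteq> 0" using n X0 by simp
  obtain c where C: "cos (\<alpha> t) = c" by blast
  obtain s where S: "sin (\<alpha> t) = s" by blast
  obtain w1 where W1: "deriv \<alpha> t = w1" by blast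
  obtain w2 where W2: "deriv (deriv \<alpha>) t = w2" by blast
  obtain kk where K: "kap t = kk" by blast
  have cs': "c^2 + s^2 = 1" using cs C S by simp
  have k': "kk * w1 = w2 / 2 + \<mu> * a * b / 4" using k K W1 W2 by simp
  show ?thesis
    unfolding conv_def cr1_def cr2_def cr3_def rot1_def rot2_def rot3_def lap_def
    apply (simp only: V_t[OF q] V_x[OF q] V_y[OF q] V_z V_xx[OF q] V_yy[OF q] VXX[OF q] VYY[OF q] P_y[OF q] HA_x HA_y HA_z HB_x HB_y HB_z HC_x HC_y HC_z HC_t W_x W_y W_z pd_zero pd_zero2)
    apply (simp add: U_def V_def W_def HA_def HB_def HC_def UXf_def UYf_def VXf_def VYf_def)?
    apply (simp only: X0 Y0)?
    apply (simp only: xe' ye')?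
    apply (simp only: C S W1 W2 K)?
    using n' r apply (simp add: field_simps)?
    using cs' k' apply (algebra)?
    apply (simp add: power2_eq_square)?
    done
qed

lemma E_momw: assumes q: "(t,x,y,z) \<in> Om"
  shows "pdt W t x y z + conv U V W W t x y z
        - \<mu> * cr3 HA HB HC (rot1 HA HB HC) (rot2 HA HB HC) (rot3 HA HB HC) t x y z
        + (1 / \<rho>) * pdz P t x y z = \<nu> * lap W t x y z"
proof -
  have n: "Xf t x y z \<noteq> 0" using Xnz[OF q] .
  have t: "t \<in> I" using tI[OF q] .
  have r: "\<rho> \<noteq> 0" using rpos by simp
  have cs: "(cos (\<alpha> t))^2 + (sin (\<alpha> t))^2 = 1" by simp
  have k: "kap t * deriv \<alpha> t = deriv (deriv \<alpha>) t / 2 + \<mu> * a * b / 4" using kr[OF t] .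
  have xe: "x = cos (\<alpha> t) * Xf t x y z - sin (\<alpha> t) * Yf t x y z"
    unfolding Xf_def Yf_def using cs by algebra
  have ye: "y = sin (\<alpha> t) * Xf t x y z + cos (\<alpha> t) * Yf t x y z"
    unfolding Xf_def Yf_def using cs by algebra
  obtain X0 where X0: "Xf t x y z = X0" by blast
  obtain Y0 where Y0: "Yf t x y z = Y0" by blast
  have xe': "x = cos (\<alpha> t) * X0 - sin (\<alpha> t) * Y0" using xe X0 Y0 by simp
  have ye': "y = sin (\<alpha> t) * X0 + cos (\<alpha> t) * Y0" using ye X0 Y0 by simp
  have n': "X0 \<noteq> 0" using n X0 by simp
  obtain c where C: "cos (\<alpha> t) = c" by blast
  obtain s where S: "sin (\<alpha> t) = s" by blast
  obtain w1 where W1: "deriv \<alpha> t = w1" by blast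
  obtain w2 where W2: "deriv (deriv \<alpha>) t = w2" by blast
  obtain kk where K: "kap t = kk" by blast
  have cs': "c^2 + s^2 = 1" using cs C S by simp
  have k': "kk * w1 = w2 / 2 + \<mu> * a * b / 4" using k K W1 W2 by simp
  show ?thesis
    unfolding conv_def cr1_def cr2_def cr3_def rot1_def rot2_def rot3_def lap_def
    apply (simp only: W_t[OF q] P_z[OF q] HA_x HA_y HA_z HB_x HB_y HB_z HC_x HC_y HC_z HC_t W_x W_y W_z pd_zero pd_zero2)
    apply (simp add: U_def V_def W_def HA_def HB_def HC_def UXf_def UYf_def VXf_def VYf_def)?
    apply (simp only: X0 Y0)?
    apply (simp only: xe' ye')?
    apply (simp only: C S W1 W2 K)?
    using n' r apply (simp add: field_simps)?
    using cs' k' apply (algebra)?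
    apply (simp add: power2_eq_square)?
    done
qed

lemma E_divH: assumes q: "(t,x,y,z) \<in> Om"
  shows "pdx HA t x y z + pdy HB t x y z + pdz HC t x y z = 0"
proof -
  have n: "Xf t x y z \<noteq> 0" using Xnz[OF q] .
  have t: "t \<in> I" using tI[OF q] .
  have r: "\<rho> \<noteq> 0" using rpos by simp
  have cs: "(cos (\<alpha> t))^2 + (sin (\<alpha> t))^2 = 1" by simp
  have k: "kap t * deriv \<alpha> t = deriv (deriv \<alpha>) t / 2 + \<mu> * a * b / 4" using kr[OF t] .
  have xe: "x = cos (\<alpha> t) * Xf t x y z - sin (\<alpha> t) * Yf t x y z"
    unfolding Xf_def Yf_def using cs by algebra
  have ye: "y = sin (\<alpha> t) * Xf t x y z + cos (\<alpha> t) * Yf t x y z"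
    unfolding Xf_def Yf_def using cs by algebra
  obtain X0 where X0: "Xf t x y z = X0" by blast
  obtain Y0 where Y0: "Yf t x y z = Y0" by blast
  have xe': "x = cos (\<alpha> t) * X0 - sin (\<alpha> t) * Y0" using xe X0 Y0 by simp
  have ye': "y = sin (\<alpha> t) * X0 + cos (\<alpha> t) * Y0" using ye X0 Y0 by simp
  have n': "X0 \<noteq> 0" using n X0 by simp
  obtain c where C: "cos (\<alpha> t) = c" by blast
  obtain s where S: "sin (\<alpha> t) = s" by blast
  obtain w1 where W1: "deriv \<alpha> t = w1" by blast
  obtain w2 where W2: "deriv (deriv \<alpha>) t = w2" by blast
  obtain kk where K: "kap t = kk" by blast
  have cs': "c^2 + s^2 = 1" using cs C S by simp
  have k': "kk * w1 = w2 / 2 + \<mu> * a * b / 4" using k K W1 W2 by simp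
  show ?thesis
    unfolding conv_def cr1_def cr2_def cr3_def rot1_def rot2_def rot3_def lap_def
    apply (simp only: HA_x HA_y HA_z HB_x HB_y HB_z HC_x HC_y HC_z HC_t W_x W_y W_z pd_zero pd_zero2)
    apply (simp add: U_def V_def W_def HA_def HB_def HC_def UXf_def UYf_def VXf_def VYf_def)?
    apply (simp only: X0 Y0)?
    apply (simp only: xe' ye')?
    apply (simp only: C S W1 W2 K)?
    using n' r apply (simp add: field_simps)?
    using cs' k' apply (algebra)?
    apply (simp add: power2_eq_square)?
    done
qed

lemma E_ind1: assumes q: "(t,x,y,z) \<in> Om"
  shows "pdt HA t x y z = rot1 (cr1 U V W HA HB HC) (cr2 U V W HA HB HC) (cr3 U V W HA HB HC) t x y z
        + \<eta> * lap HA t x y z"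
proof -
  have n: "Xf t x y z \<noteq> 0" using Xnz[OF q] .
  have t: "t \<in> I" using tI[OF q] .
  have r: "\<rho> \<noteq> 0" using rpos by simp
  have cs: "(cos (\<alpha> t))^2 + (sin (\<alpha> t))^2 = 1" by simp
  have k: "kap t * deriv \<alpha> t = deriv (deriv \<alpha>) t / 2 + \<mu> * a * b / 4" using kr[OF t] .
  have xe: "x = cos (\<alpha> t) * Xf t x y z - sin (\<alpha> t) * Yf t x y z"
    unfolding Xf_def Yf_def using cs by algebra
  have ye: "y = sin (\<alpha> t) * Xf t x y z + cos (\<alpha> t) * Yf t x y z"
    unfolding Xf_def Yf_def using cs by algebra
  obtain X0 where X0: "Xf t x y z = X0" by blast
  obtain Y0 where Y0: "Yf t x y z = Y0" by blast
  have xe': "x = cos (\<alpha> t) * X0 - sin (\<alpha> t) * Y0" using xe X0 Y0 by simp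
  have ye': "y = sin (\<alpha> t) * X0 + cos (\<alpha> t) * Y0" using ye X0 Y0 by simp
  have n': "X0 \<noteq> 0" using n X0 by simp
  obtain c where C: "cos (\<alpha> t) = c" by blast
  obtain s where S: "sin (\<alpha> t) = s" by blast
  obtain w1 where W1: "deriv \<alpha> t = w1" by blast
  obtain w2 where W2: "deriv (deriv \<alpha>) t = w2" by blast
  obtain kk where K: "kap t = kk" by blast
  have cs': "c^2 + s^2 = 1" using cs C S by simp
  have k': "kk * w1 = w2 / 2 + \<mu> * a * b / 4" using k K W1 W2 by simp
  show ?thesis
    unfolding conv_def cr1_def cr2_def cr3_def rot1_def rot2_def rot3_def lap_def
    apply (simp only: cr_y[OF U_SF HB_SF V_SF HA_SF q] cr_z[OF W_SF HA_SF U_SF HC_SF q] HA_t[OF q] U_x[OF q] U_y[OF q] U_z V_x[OF q] V_y[OF q] V_z HA_x HA_y HA_z HB_x HB_y HB_z HC_x HC_y HC_z HC_t W_x W_y W_z pd_zero pd_zero2)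
    apply (simp add: U_def V_def W_def HA_def HB_def HC_def UXf_def UYf_def VXf_def VYf_def)?
    apply (simp only: X0 Y0)?
    apply (simp only: xe' ye')?
    apply (simp only: C S W1 W2 K)?
    using n' r apply (simp add: field_simps)?
    using cs' k' apply (algebra)?
    apply (simp add: power2_eq_square)?
    done
qed

lemma E_ind2: assumes q: "(t,x,y,z) \<in> Om"
  shows "pdt HB t x y z = rot2 (cr1 U V W HA HB HC) (cr2 U V W HA HB HC) (cr3 U V W HA HB HC) t x y z
        + \<eta> * lap HB t x y z"
proof -
  have n: "Xf t x y z \<noteq> 0" using Xnz[OF q] .
  have t: "t \<in> I" using tI[OF q] .
  have r: "\<rho> \<noteq> 0" using rpos by simp
  have cs: "(cos (\<alpha> t))^2 + (sin (\<alpha> t))^2 = 1" by simp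
  have k: "kap t * deriv \<alpha> t = deriv (deriv \<alpha>) t / 2 + \<mu> * a * b / 4" using kr[OF t] .
  have xe: "x = cos (\<alpha> t) * Xf t x y z - sin (\<alpha> t) * Yf t x y z"
    unfolding Xf_def Yf_def using cs by algebra
  have ye: "y = sin (\<alpha> t) * Xf t x y z + cos (\<alpha> t) * Yf t x y z"
    unfolding Xf_def Yf_def using cs by algebra
  obtain X0 where X0: "Xf t x y z = X0" by blast
  obtain Y0 where Y0: "Yf t x y z = Y0" by blast
  have xe': "x = cos (\<alpha> t) * X0 - sin (\<alpha> t) * Y0" using xe X0 Y0 by simp
  have ye': "y = sin (\<alpha> t) * X0 + cos (\<alpha> t) * Y0" using ye X0 Y0 by simp
  have n': "X0 \<noteq> 0" using n X0 by simp
  obtain c where C: "cos (\<alpha> t) = c" by blast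
  obtain s where S: "sin (\<alpha> t) = s" by blast
  obtain w1 where W1: "deriv \<alpha> t = w1" by blast
  obtain w2 where W2: "deriv (deriv \<alpha>) t = w2" by blast
  obtain kk where K: "kap t = kk" by blast
  have cs': "c^2 + s^2 = 1" using cs C S by simp
  have k': "kk * w1 = w2 / 2 + \<mu> * a * b / 4" using k K W1 W2 by simp
  show ?thesis
    unfolding conv_def cr1_def cr2_def cr3_def rot1_def rot2_def rot3_def lap_def
    apply (simp only: cr_z[OF V_SF HC_SF W_SF HB_SF q] cr_x[OF U_SF HB_SF V_SF HA_SF q] HB_t[OF q] U_x[OF q] U_y[OF q] U_z V_x[OF q] V_y[OF q] V_z HA_x HA_y HA_z HB_x HB_y HB_z HC_x HC_y HC_z HC_t W_x W_y W_z pd_zero pd_zero2)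
    apply (simp add: U_def V_def W_def HA_def HB_def HC_def UXf_def UYf_def VXf_def VYf_def)?
    apply (simp only: X0 Y0)?
    apply (simp only: xe' ye')?
    apply (simp only: C S W1 W2 K)?
    using n' r apply (simp add: field_simps)?
    using cs' k' apply (algebra)?
    apply (simp add: power2_eq_square)?
    done
qed

lemma E_ind3: assumes q: "(t,x,y,z) \<in> Om"
  shows "pdt HC t x y z = rot3 (cr1 U V W HA HB HC) (cr2 U V W HA HB HC) (cr3 U V W HA HB HC) t x y z
        + \<eta> * lap HC t x y z"
proof -
  have n: "Xf t x y z \<noteq> 0" using Xnz[OF q] .
  have t: "t \<in> I" using tI[OF q] .
  have r: "\<rho> \<noteq> 0" using rpos by simp
  have cs: "(cos (\<alpha> t))^2 + (sin (\<alpha> t))^2 = 1" by simp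
  have k: "kap t * deriv \<alpha> t = deriv (deriv \<alpha>) t / 2 + \<mu> * a * b / 4" using kr[OF t] .
  have xe: "x = cos (\<alpha> t) * Xf t x y z - sin (\<alpha> t) * Yf t x y z"
    unfolding Xf_def Yf_def using cs by algebra
  have ye: "y = sin (\<alpha> t) * Xf t x y z + cos (\<alpha> t) * Yf t x y z"
    unfolding Xf_def Yf_def using cs by algebra
  obtain X0 where X0: "Xf t x y z = X0" by blast
  obtain Y0 where Y0: "Yf t x y z = Y0" by blast
  have xe': "x = cos (\<alpha> t) * X0 - sin (\<alpha> t) * Y0" using xe X0 Y0 by simp
  have ye': "y = sin (\<alpha> t) * X0 + cos (\<alpha> t) * Y0" using ye X0 Y0 by simp
  have n': "X0 \<noteq> 0" using n X0 by simp
  obtain c where C: "cos (\<alpha> t) = c" by blast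
  obtain s where S: "sin (\<alpha> t) = s" by blast
  obtain w1 where W1: "deriv \<alpha> t = w1" by blast
  obtain w2 where W2: "deriv (deriv \<alpha>) t = w2" by blast
  obtain kk where K: "kap t = kk" by blast
  have cs': "c^2 + s^2 = 1" using cs C S by simp
  have k': "kk * w1 = w2 / 2 + \<mu> * a * b / 4" using k K W1 W2 by simp
  show ?thesis
    unfolding conv_def cr1_def cr2_def cr3_def rot1_def rot2_def rot3_def lap_def
    apply (simp only: cr_x[OF W_SF HA_SF U_SF HC_SF q] cr_y[OF V_SF HC_SF W_SF HB_SF q] U_x[OF q] U_y[OF q] U_z V_x[OF q] V_y[OF q] V_z HA_x HA_y HA_z HB_x HB_y HB_z HC_x HC_y HC_z HC_t W_x W_y W_z pd_zero pd_zero2)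
    apply (simp add: U_def V_def W_def HA_def HB_def HC_def UXf_def UYf_def VXf_def VYf_def)?
    apply (simp only: X0 Y0)?
    apply (simp only: xe' ye')?
    apply (simp only: C S W1 W2 K)?
    using n' r apply (simp add: field_simps)?
    using cs' k' apply (algebra)?
    apply (simp add: power2_eq_square)?
    done
qed


lemma main: "MHD_solution \<nu> \<eta> \<mu> \<rho> Om U V W HA HB HC P"
  unfolding MHD_solution_def
proof (intro conjI)
  show "\<forall>f\<in>{U, V, W, HA, HB, HC, P}. smooth4 Om f"
    using SF_smooth4[OF Om_open h\<alpha>] U_SF V_SF W_SF HA_SF HB_SF HC_SF P_SF by auto
  show "\<forall>(t,x,y,z)\<in>Om.
      pdx U t x y z + pdy V t x y z + pdz W t x y z = 0 \<and>
      pdt U t x y z + conv U V W U t x y z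
        - \<mu> * cr1 HA HB HC (rot1 HA HB HC) (rot2 HA HB HC) (rot3 HA HB HC) t x y z
        + (1 / \<rho>) * pdx P t x y z = \<nu> * lap U t x y z \<and>
      pdt V t x y z + conv U V W V t x y z
        - \<mu> * cr2 HA HB HC (rot1 HA HB HC) (rot2 HA HB HC) (rot3 HA HB HC) t x y z
        + (1 / \<rho>) * pdy P t x y z = \<nu> * lap V t x y z \<and>
      pdt W t x y z + conv U V W W t x y z
        - \<mu> * cr3 HA HB HC (rot1 HA HB HC) (rot2 HA HB HC) (rot3 HA HB HC) t x y z
        + (1 / \<rho>) * pdz P t x y z = \<nu> * lap W t x y z \<and>
      pdx HA t x y z + pdy HB t x y z + pdz HC t x y z = 0 \<and>
      pdt HA t x y z = rot1 (cr1 U V W HA HB HC) (cr2 U V W HA HB HC) (cr3 U V W HA HB HC) t x y z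
        + \<eta> * lap HA t x y z \<and>
      pdt HB t x y z = rot2 (cr1 U V W HA HB HC) (cr2 U V W HA HB HC) (cr3 U V W HA HB HC) t x y z
        + \<eta> * lap HB t x y z \<and>
      pdt HC t x y z = rot3 (cr1 U V W HA HB HC) (cr2 U V W HA HB HC) (cr3 U V W HA HB HC) t x y z
        + \<eta> * lap HC t x y z"
    apply (intro ballI)
    apply clarify
    apply (intro conjI)
           apply (erule E_divv)
          apply (erule momu)
         apply (erule E_momv)
        apply (erule E_momw)
       apply (erule E_divH)
      apply (erule E_ind1)
     apply (erule E_ind2)
    apply (erule E_ind3)
    done
qed

end

theorem mainTheorem6:
  fixes \<alpha> :: "real \<Rightarrow> real" and I :: "real set"
    and a b \<nu> \<eta> \<mu>\<^sub>0 \<rho> :: real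
    and \<kappa> :: "real \<Rightarrow> real"
    and X Y u v w H1 H2 H3 :: sfield
    and \<Omega> :: "(real \<times> real \<times> real \<times> real) set"
  assumes "\<nu> > 0" and "\<eta> > 0" and "\<mu>\<^sub>0 > 0" and "\<rho> > 0"
    and "is_interval I" and "open I"
    and "smooth1 I \<alpha>"
    and "\<forall>t\<in>I. deriv \<alpha> t \<noteq> 0"
  defines "\<kappa> \<equiv> \<lambda>t. deriv (deriv \<alpha>) t / (2 * deriv \<alpha> t) + \<mu>\<^sub>0 * a * b / (4 * deriv \<alpha> t)"
    and "X \<equiv> \<lambda>t x y z. x * cos (\<alpha> t) + y * sin (\<alpha> t)"
    and "Y \<equiv> \<lambda>t x y z. - x * sin (\<alpha> t) + y * cos (\<alpha> t)"
    and "\<Omega> \<equiv> {(t, x, y, z). t \<in> I \<and> X t x y z \<noteq> 0}"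
    and "u \<equiv> \<lambda>t x y z. - \<kappa> t * x - deriv \<alpha> t * y - 6 * \<nu> * cos (\<alpha> t) / X t x y z
                      + 6 * \<nu> * sin (\<alpha> t) * Y t x y z / (X t x y z)\<^sup>2"
    and "v \<equiv> \<lambda>t x y z. deriv \<alpha> t * x - \<kappa> t * y - 6 * \<nu> * sin (\<alpha> t) / X t x y z
                      - 6 * \<nu> * cos (\<alpha> t) * Y t x y z / (X t x y z)\<^sup>2"
    and "w \<equiv> \<lambda>t x y z. 2 * \<kappa> t * z"
    and "H1 \<equiv> \<lambda>t x y z. - (a * X t x y z + b * Y t x y z) * sin (\<alpha> t)"
    and "H2 \<equiv> \<lambda>t x y z. (a * X t x y z + b * Y t x y z) * cos (\<alpha> t)"
    and "H3 \<equiv> \<lambda>t x y z. - b * z"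
  shows "\<exists>p :: sfield. MHD_solution \<nu> \<eta> \<mu>\<^sub>0 \<rho> \<Omega> u v w H1 H2 H3 p"
proof -
  interpret M: mhd \<alpha> I \<nu> \<mu>\<^sub>0 \<rho> a b
    by unfold_locales (use assms(4,6,7,8) in auto)
  have k: "\<kappa> = M.kap" unfolding \<kappa>_def by (simp add: fun_eq_iff M.kap_def)
  have x: "X = M.Xf" unfolding X_def M.Xf_def ..
  have y: "Y = M.Yf" unfolding Y_def M.Yf_def ..
  have "\<Omega> = M.Om" unfolding \<Omega>_def M.Om_def x ..
  moreover have "u = M.U" unfolding u_def M.U_def k x y ..
  moreover have "v = M.V" unfolding v_def M.V_def k x y ..
  moreover have "w = M.W" unfolding w_def M.W_def k ..
  moreover have "H1 = M.HA" unfolding H1_def M.HA_def x y ..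
  moreover have "H2 = M.HB" unfolding H2_def M.HB_def x y ..
  moreover have "H3 = M.HC" unfolding H3_def M.HC_def ..
  ultimately show ?thesis using M.main[of \<eta>] by blast
qed

end
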